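(* Let $s\ge1$, $p\in F_{2,2s}$, and let $S(H_p)=(p_H,n_H)$. (1) If $(a,b)\in\mathcal B(p)$, then $p_H\le a$ and $n_H\le b$. (2) If $p\in Q_{2,2s}$, then $p$ has a unique signature and $S(p)=S(H_p)=(\operatorname{rank}H_p,0)$. (3) If there is $(a,b)\in\mathcal B(p)$ with $a+b=p_H+n_H=\operatorname{rank}H_p$, then $p$ has a unique signature and $S(p)=S(H_p)$.
   Context: $F_{2,2s}$ is the space of real binary forms of degree $2s$ in $x,y$. A representation of $p\in F_{2,2s}$ is an expression $p=\sum_{j=1}^r\lambda_j(\alpha_jx+\beta_jy)^{2s}$ with $r\ge0$ (empty sum $=0$), $\alpha_j,\beta_j\in\mathbb R$, $0\ne\lambda_j\in\mathbb R$; it is honest if the linear forms $\alpha_jx+\beta_jy$ are pairwise non-proportional. Its badge is $(a,b)$ where $a=\#\{j:\lambda_j>0\}$, $b=\#\{j:\lambda_j<0\}$. $\mathcal B(p)$ is the set of badges of honest representations of $p$. Badges are ordered by $(a,b)\preceq(c,d)$ iff $a\le c$ and $b\le d$; a signature of $p$ is a minimal element of $\mathcal B(p)$ for $\preceq$, and if there is exactly one signature it is denoted $S(p)$. $Q_{2,2s}$ is the set of all finite sums $\sum_k(\xi_kx+\eta_ky)^{2s}$ with $\xi_k,\eta_k\in\mathbb R$. For $p=\sum_{j=0}^{2s}\binom{2s}{j}a_jx^{2s-j}y^j$, the catalecticant is the quadratic form $H_p(t_0,\dots,t_s)=\sum_{i,j=0}^s a_{i+j}t_it_j$; $S(H_p)$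 is the pair (number of positive eigenvalues, number of negative eigenvalues) of the Hankel matrix $(a_{i+j})_{0\le i,j\le s}$, and $\operatorname{rank}H_p$ is the rank of that matrix. *)

theory Defs
  imports Complex_Main "Jordan_Normal_Form.Char_Poly" "Jordan_Normal_Form.DL_Rank"
begin

text \<open>A binary form p of degree 2s is given by its coefficient sequence a, via
  p(x,y) = sum_{j=0}^{2s} binom(2s,j) a_j x^(2s-j) y^j.
  Only the coefficients a_0..a_{2s} are relevant.\<close>

definition form_eval :: "nat \<Rightarrow> (nat \<Rightarrow> real) \<Rightarrow> real \<Rightarrow> real \<Rightarrow> real" where
  "form_eval s a x y = (\<Sum>j=0..2*s. real ((2*s) choose j) * a j * x ^ (2*s - j) * y ^ j)"

definition is_repr :: "nat \<Rightarrow> (nat \<Rightarrow> real) \<Rightarrow> (real \<times> real \<times> real) list \<Rightarrow> bool" where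
  "is_repr s a R \<longleftrightarrow> (\<forall>t \<in> set R. fst t \<noteq> 0) \<and>
     (\<forall>x y. form_eval s a x y =
        (\<Sum>t\<leftarrow>R. fst t * (fst (snd t) * x + snd (snd t) * y) ^ (2*s)))"

definition proportional :: "real \<times> real \<Rightarrow> real \<times> real \<Rightarrow> bool" where
  "proportional l m \<longleftrightarrow>
     (\<exists>c. fst l = c * fst m \<and> snd l = c * snd m) \<or> (\<exists>c. fst m = c * fst l \<and> snd m = c * snd l)"

definition honest :: "(real \<times> real \<times> real) list \<Rightarrow> bool" where
  "honest R \<longleftrightarrow> (\<forall>i < length R. \<forall>j < length R. i \<noteq> j \<longrightarrow>
      \<not> proportional (snd (R ! i)) (snd (R ! j)))"

definition badge :: "(real \<times> real \<times> real) list \<Rightarrow> nat \<times> nat" where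
  "badge R = (length (filter (\<lambda>t. fst t > 0) R), length (filter (\<lambda>t. fst t < 0) R))"

definition badges :: "nat \<Rightarrow> (nat \<Rightarrow> real) \<Rightarrow> (nat \<times> nat) set" where
  "badges s a = {badge R | R. is_repr s a R \<and> honest R}"

definition badge_le :: "nat \<times> nat \<Rightarrow> nat \<times> nat \<Rightarrow> bool" where
  "badge_le u v \<longleftrightarrow> fst u \<le> fst v \<and> snd u \<le> snd v"

definition signatures :: "nat \<Rightarrow> (nat \<Rightarrow> real) \<Rightarrow> (nat \<times> nat) set" where
  "signatures s a = {u \<in> badges s a. \<forall>v \<in> badges s a. badge_le v u \<longrightarrow> v = u}"

text \<open>Q_{2,2s}: finite sums of 2s-th powers of real linear forms (empty sum allowed).\<close>
definition in_Q :: "nat \<Rightarrow> (nat \<Rightarrow> real) \<Rightarrow> bool" where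
  "in_Q s a \<longleftrightarrow> (\<exists>L :: (real \<times> real) list. \<forall>x y.
      form_eval s a x y = (\<Sum>l\<leftarrow>L. (fst l * x + snd l * y) ^ (2*s)))"

definition hankel :: "nat \<Rightarrow> (nat \<Rightarrow> real) \<Rightarrow> real mat" where
  "hankel s a = mat (s+1) (s+1) (\<lambda>(i,j). a (i+j))"

definition num_pos_eig :: "real mat \<Rightarrow> nat" where
  "num_pos_eig A = (\<Sum>c \<in> {c. c > 0 \<and> eigenvalue A c}. Polynomial.order c (char_poly A))"

definition num_neg_eig :: "real mat \<Rightarrow> nat" where
  "num_neg_eig A = (\<Sum>c \<in> {c. c < 0 \<and> eigenvalue A c}. Polynomial.order c (char_poly A))"

definition sig_H :: "nat \<Rightarrow> (nat \<Rightarrow> real) \<Rightarrow> nat \<times> nat" where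
  "sig_H s a = (num_pos_eig (hankel s a), num_neg_eig (hankel s a))"

definition rank_H :: "nat \<Rightarrow> (nat \<Rightarrow> real) \<Rightarrow> nat" where
  "rank_H s a = vec_space.rank (s+1) (hankel s a)"

end

theory Submission
  imports Defs "Jordan_Normal_Form.Schur_Decomposition"
begin

lemma real_sym_eigen:
  fixes A :: "real mat"
  assumes A: "A \<in> carrier_mat n n" and sym: "A\<^sup>T = A" and n: "n > 0"
  shows "\<exists>e v. v \<in> carrier_vec n \<and> v \<noteq> 0\<^sub>v n \<and> A *\<^sub>v v = e \<cdot>\<^sub>v v"
proof -
  define Ac where "Ac = map_mat complex_of_real A"
  have Ac: "Ac \<in> carrier_mat n n" using A unfolding Ac_def by auto
  from char_poly_factorized[OF Ac] obtain as where
    cp: "char_poly Ac = (\<Prod>a\<leftarrow>as. [:- a, 1:])" and len: "length as = n" by blast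
  then obtain c rest where as: "as = c # rest" using n by (cases as) auto
  have "poly (char_poly Ac) c = 0" unfolding cp as by simp
  hence "eigenvalue Ac c" using eigenvalue_root_char_poly[OF Ac] by simp
  then obtain v where ev: "eigenvector Ac v c" unfolding eigenvalue_def by blast
  hence v: "v \<in> carrier_vec n" "v \<noteq> 0\<^sub>v n" "Ac *\<^sub>v v = c \<cdot>\<^sub>v v"
    unfolding eigenvector_def using Ac by auto
  have Avi: "(Ac *\<^sub>v v) $ i = (\<Sum>j<n. of_real (A $$ (i,j)) * v $ j)" if "i < n" for i
    using that v(1) A unfolding Ac_def
    by (auto simp: scalar_prod_def lessThan_atLeast0)
  define S where "S = (\<Sum>i<n. cnj (v $ i) * (Ac *\<^sub>v v) $ i)"
  have S1: "S = c * of_real (\<Sum>i<n. (cmod (v $ i))^2)"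
  proof -
    have "S = (\<Sum>i<n. cnj (v $ i) * (c * v $ i))"
      unfolding S_def using v(1) by (intro sum.cong) (auto simp: v(3))
    also have "\<dots> = c * (\<Sum>i<n. cnj (v $ i) * v $ i)"
      by (simp add: sum_distrib_left algebra_simps)
    also have "(\<Sum>i<n. cnj (v $ i) * v $ i) = of_real (\<Sum>i<n. (cmod (v $ i))^2)"
      by (simp add: complex_norm_square mult.commute del: of_real_power)
    finally show ?thesis .
  qed
  have S2: "S = (\<Sum>i<n. \<Sum>j<n. cnj (v $ i) * of_real (A $$ (i,j)) * v $ j)"
    unfolding S_def by (intro sum.cong refl) (simp add: Avi sum_distrib_left mult.assoc)
  have symA: "A $$ (i,j) = A $$ (j,i)" if "i < n" "j < n" for i j
    using that A sym by (metis carrier_matD(1) carrier_matD(2) index_transpose_mat(1))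
  have "cnj S = (\<Sum>i<n. \<Sum>j<n. v $ i * of_real (A $$ (i,j)) * cnj (v $ j))"
    unfolding S2 by simp
  also have "\<dots> = (\<Sum>j<n. \<Sum>i<n. v $ i * of_real (A $$ (i,j)) * cnj (v $ j))"
    by (rule sum.swap)
  also have "\<dots> = S"
    unfolding S2 by (intro sum.cong refl) (auto simp: symA mult.commute mult.left_commute)
  finally have "Im S = 0" by (metis cnj.simps(2) neg_equal_zero)
  moreover have N: "(\<Sum>i<n. (cmod (v $ i))^2) > 0"
  proof -
    from v(1,2) obtain i where i: "i < n" "v $ i \<noteq> 0" by (metis carrier_vecD eq_vecI index_zero_vec)
    have "(cmod (v $ i))^2 \<le> (\<Sum>i<n. (cmod (v $ i))^2)"
      by (rule member_le_sum) (use i in auto)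
    moreover have "(cmod (v $ i))^2 > 0" using i by simp
    ultimately show ?thesis by linarith
  qed
  ultimately have "Im c = 0" unfolding S1 by simp
  hence c: "c = of_real (Re c)" by (simp add: complex_eq_iff)
  have "char_poly Ac = map_poly of_real (char_poly A)"
    unfolding Ac_def by (rule of_real_hom.char_poly_hom[OF A])
  hence "of_real (poly (char_poly A) (Re c)) = (0::complex)"
    using \<open>poly (char_poly Ac) c = 0\<close> c by (metis of_real_hom.poly_map_poly)
  hence "poly (char_poly A) (Re c) = 0" by simp
  hence "eigenvalue A (Re c)" using eigenvalue_root_char_poly[OF A] by simp
  then obtain w where "eigenvector A w (Re c)" unfolding eigenvalue_def by blast
  thus ?thesis unfolding eigenvector_def using A by auto
qed

lemma sprodc_real: "(v::real vec) \<bullet>c w = v \<bullet> w"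
  by (simp add: vec_conjugate_real)

definition orth_mat :: "nat \<Rightarrow> real mat \<Rightarrow> bool" where
  "orth_mat n P \<longleftrightarrow> P \<in> carrier_mat n n \<and> P\<^sup>T * P = 1\<^sub>m n \<and> P * P\<^sup>T = 1\<^sub>m n"

lemma orthonormal_basis_hd:
  fixes u :: "real vec"
  assumes u: "u \<in> carrier_vec n" and uu: "u \<bullet> u = 1"
  shows "\<exists>W. orth_mat n W \<and> col W 0 = u"
proof -
  interpret cof_vec_space n "TYPE(real)" .
  have n: "n \<noteq> 0" using u uu by (cases n) (auto simp: scalar_prod_def)
  have u0: "u \<noteq> 0\<^sub>v n" using uu by auto
  define b where "b = basis_completion u"
  define ws where "ws = gram_schmidt n b"
  from basis_completion[OF u u0, folded b_def]
  have dist_b: "distinct b" and indep: "\<not> lin_dep (set b)" and b: "set b \<subseteq> carrier_vec n"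
    and hdb: "hd b = u" and len_b: "length b = n" by auto
  from hdb len_b n obtain vs where bv: "b = u # vs" by (cases b, auto)
  from gram_schmidt_result[OF b dist_b indep refl, folded ws_def]
  have ws: "set ws \<subseteq> carrier_vec n" "corthogonal ws" "length ws = n"
    by (auto simp: len_b)
  from gram_schmidt_hd[OF u, of vs, folded bv] have hdws: "hd ws = u" unfolding ws_def .
  have orth: "(ws ! i \<bullet> ws ! j = 0) = (i \<noteq> j)" if "i < n" "j < n" for i j
    using corthogonalD[OF ws(2)] that ws(3) by (simp add: sprodc_real)
  have wsc: "ws ! i \<in> carrier_vec n" if "i < n" for i using ws that by auto
  have pos: "ws ! i \<bullet> ws ! i > 0" if "i < n" for i
  proof -
    have "ws ! i \<bullet> ws ! i \<ge> 0" using conjugate_square_ge_0_vec[of "ws ! i"] by (simp add: sprodc_real)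
    with orth[OF that that] show ?thesis by auto
  qed
  define ws' where "ws' = map (\<lambda>w. (1 / sqrt (w \<bullet> w)) \<cdot>\<^sub>v w) ws"
  have len': "length ws' = n" unfolding ws'_def using ws by simp
  have ws'i: "ws' ! i = (1 / sqrt (ws ! i \<bullet> ws ! i)) \<cdot>\<^sub>v ws ! i" if "i < n" for i
    unfolding ws'_def using that ws(3) by simp
  have ws'c: "ws' ! i \<in> carrier_vec n" if "i < n" for i using ws'i[OF that] wsc[OF that] by simp
  have on: "ws' ! i \<bullet> ws' ! j = (if i = j then 1 else 0)" if "i < n" "j < n" for i j
  proof -
    have "ws' ! i \<bullet> ws' ! j = (1 / sqrt (ws ! i \<bullet> ws ! i)) * (1 / sqrt (ws ! j \<bullet> ws ! j)) * (ws ! i \<bullet> ws ! j)"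
      unfolding ws'i[OF that(1)] ws'i[OF that(2)] using wsc that
      by (simp add: smult_scalar_prod_distrib[OF wsc[OF that(1)] wsc[OF that(2)]] scalar_prod_smult_distrib[of _ n])
    also have "\<dots> = (if i = j then 1 else 0)"
    proof (cases "i = j")
      case True
      have "sqrt (ws ! i \<bullet> ws ! i) * sqrt (ws ! i \<bullet> ws ! i) = ws ! i \<bullet> ws ! i"
        using pos[OF that(1)] by simp
      thus ?thesis using True pos[OF that(1)] by (simp add: field_simps)
    next
      case False thus ?thesis using orth[OF that] by simp
    qed
    finally show ?thesis .
  qed
  have set': "set ws' \<subseteq> carrier_vec n" using ws'c len' by (auto simp: in_set_conv_nth)
  define W where "W = mat_of_cols n ws'"
  have W: "W \<in> carrier_mat n n" unfolding W_def using len' by auto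
  have colW: "col W i = ws' ! i" if "i < n" for i unfolding W_def using that len' ws'c by simp
  have WW: "W\<^sup>T * W = 1\<^sub>m n"
  proof (rule eq_matI)
    fix i j assume "i < dim_row (1\<^sub>m n)" "j < dim_col (1\<^sub>m n)"
    hence ij: "i < n" "j < n" by auto
    have "(W\<^sup>T * W) $$ (i,j) = col W i \<bullet> col W j" using W ij by simp
    also have "\<dots> = 1\<^sub>m n $$ (i,j)" using ij by (simp add: colW on)
    finally show "(W\<^sup>T * W) $$ (i,j) = 1\<^sub>m n $$ (i,j)" .
  qed (use W in auto)
  have WW2: "W * W\<^sup>T = 1\<^sub>m n" using mat_mult_left_right_inverse[OF _ W WW] W by auto
  have "hd ws' = u" unfolding ws'_def using hdws n ws(3) uu by (cases ws) auto
  hence "ws' ! 0 = u" using len' n by (cases ws') auto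
  hence "col W 0 = u" using colW n by auto
  thus ?thesis using W WW WW2 unfolding orth_mat_def by blast
qed

lemma assoc_nn: "X \<in> carrier_mat n n \<Longrightarrow> Y \<in> carrier_mat n n \<Longrightarrow> Z \<in> carrier_mat n n \<Longrightarrow>
  X * Y * Z = X * (Y * Z)" by (rule assoc_mult_mat)

theorem spectral:
  fixes A :: "real mat"
  assumes "A \<in> carrier_mat n n" "A\<^sup>T = A"
  shows "\<exists>P D. orth_mat n P \<and> D \<in> carrier_mat n n \<and> diagonal_mat D \<and> A = P * D * P\<^sup>T"
  using assms
proof (induction n arbitrary: A)
  case 0
  have "A = 1\<^sub>m 0 * 0\<^sub>m 0 0 * (1\<^sub>m 0)\<^sup>T" using 0 by (intro eq_matI) auto
  moreover have "orth_mat 0 (1\<^sub>m 0)" unfolding orth_mat_def by auto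
  moreover have "diagonal_mat (0\<^sub>m 0 0 :: real mat)" unfolding diagonal_mat_def by auto
  moreover have "(0\<^sub>m 0 0 :: real mat) \<in> carrier_mat 0 0" by simp
  ultimately show ?case by blast
next
  case (Suc m A)
  let ?n = "Suc m"
  have A: "A \<in> carrier_mat ?n ?n" and symA: "A\<^sup>T = A" by fact+
  obtain e v where v: "v \<in> carrier_vec ?n" "v \<noteq> 0\<^sub>v ?n" "A *\<^sub>v v = e \<cdot>\<^sub>v v"
    using real_sym_eigen[OF A symA] by auto
  have vv: "v \<bullet> v > 0" using conjugate_square_greater_0_vec[OF v(1)] v(2) by (simp add: sprodc_real)
  define u where "u = (1 / sqrt (v \<bullet> v)) \<cdot>\<^sub>v v"
  have u: "u \<in> carrier_vec ?n" unfolding u_def using v by simp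
  have uu: "u \<bullet> u = 1" unfolding u_def using v(1) vv
    by (simp add: smult_scalar_prod_distrib[OF v(1) v(1)] scalar_prod_smult_distrib[of _ ?n])
  have Au: "A *\<^sub>v u = e \<cdot>\<^sub>v u" unfolding u_def using v A
    by (auto simp: mult_mat_vec[OF A v(1)] smult_smult_assoc mult.commute)
  obtain W where W: "orth_mat ?n W" and W0: "col W 0 = u" using orthonormal_basis_hd[OF u uu] by blast
  have Wc: "W \<in> carrier_mat ?n ?n" and WW: "W\<^sup>T * W = 1\<^sub>m ?n" and WW2: "W * W\<^sup>T = 1\<^sub>m ?n"
    using W unfolding orth_mat_def by auto
  have WTc: "W\<^sup>T \<in> carrier_mat ?n ?n" using Wc by auto
  define B where "B = W\<^sup>T * A * W"
  have Bc: "B \<in> carrier_mat ?n ?n" unfolding B_def using Wc A by auto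
  have symB: "B\<^sup>T = B"
  proof -
    have "B\<^sup>T = (A * W)\<^sup>T * W\<^sup>T\<^sup>T" unfolding B_def using Wc A
      by (simp add: assoc_nn[OF WTc A Wc] transpose_mult[of _ ?n ?n _ ?n])
    also have "\<dots> = W\<^sup>T * A * W" using Wc A symA by (simp add: transpose_mult[of _ ?n ?n _ ?n])
    finally show ?thesis unfolding B_def .
  qed
  have colB: "col B 0 = e \<cdot>\<^sub>v unit_vec ?n 0"
  proof -
    have "col B 0 = (W\<^sup>T * A) *\<^sub>v col W 0" unfolding B_def by (rule col_mult2[of "W\<^sup>T * A" ?n ?n W ?n 0]) (use WTc A Wc in auto)
    also have "\<dots> = W\<^sup>T *\<^sub>v (A *\<^sub>v u)" unfolding W0 by (rule assoc_mult_mat_vec[OF WTc A u])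
    also have "\<dots> = e \<cdot>\<^sub>v (W\<^sup>T *\<^sub>v col W 0)" unfolding Au W0 using WTc u by (simp add: mult_mat_vec)
    also have "W\<^sup>T *\<^sub>v col W 0 = col (W\<^sup>T * W) 0" by (rule col_mult2[of "W\<^sup>T" ?n ?n W ?n 0, symmetric]) (use Wc in auto)
    also have "\<dots> = unit_vec ?n 0" unfolding WW by simp
    finally show ?thesis .
  qed
  have Bi0: "B $$ (i, 0) = (if i = 0 then e else 0)" if "i < ?n" for i
  proof -
    have "B $$ (i, 0) = col B 0 $ i" using Bc that by simp
    thus ?thesis unfolding colB using that by simp
  qed
  have B0j: "B $$ (0, j) = (if j = 0 then e else 0)" if "j < ?n" for j
    using Bi0[OF that] arg_cong[OF symB, of "\<lambda>M. M $$ (j, 0)"] Bc that by simp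
  define B3 where "B3 = mat m m (\<lambda>(i,j). B $$ (Suc i, Suc j))"
  have B3c: "B3 \<in> carrier_mat m m" unfolding B3_def by simp
  have symB3: "B3\<^sup>T = B3"
  proof (rule eq_matI)
    fix i j assume "i < dim_row B3" "j < dim_col B3"
    thus "B3\<^sup>T $$ (i, j) = B3 $$ (i, j)"
      unfolding B3_def using arg_cong[OF symB, of "\<lambda>M. M $$ (Suc i, Suc j)"] Bc by auto
  qed (auto simp: B3_def)
  obtain P3 D3 where P3: "orth_mat m P3" and D3: "D3 \<in> carrier_mat m m" "diagonal_mat D3"
    and B3eq: "B3 = P3 * D3 * P3\<^sup>T" using Suc.IH[OF B3c symB3] by blast
  have P3c: "P3 \<in> carrier_mat m m" and P3P3: "P3\<^sup>T * P3 = 1\<^sub>m m" using P3 unfolding orth_mat_def by auto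
  define e1 where "e1 = (mat 1 1 (\<lambda>_. e) :: real mat)"
  have e1c: "e1 \<in> carrier_mat 1 1" unfolding e1_def by simp
  have Bblk: "B = four_block_mat e1 (0\<^sub>m 1 m) (0\<^sub>m m 1) B3"
  proof (rule eq_matI)
    fix i j assume ij: "i < dim_row (four_block_mat e1 (0\<^sub>m 1 m) (0\<^sub>m m 1) B3)"
      "j < dim_col (four_block_mat e1 (0\<^sub>m 1 m) (0\<^sub>m m 1) B3)"
    hence ij': "i < ?n" "j < ?n" using e1c B3c by auto
    show "B $$ (i, j) = four_block_mat e1 (0\<^sub>m 1 m) (0\<^sub>m m 1) B3 $$ (i, j)"
    proof (cases "i = 0 \<or> j = 0")
      case True
      thus ?thesis using Bi0 B0j ij' e1c B3c by (auto simp: e1_def)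
    next
      case False
      then obtain i' j' where "i = Suc i'" "j = Suc j'" by (cases i; cases j) auto
      thus ?thesis using ij' e1c B3c by (auto simp: B3_def)
    qed
  qed (use Bc e1c B3c in auto)
  define E where "E = four_block_mat (1\<^sub>m 1) (0\<^sub>m 1 m) (0\<^sub>m m 1) P3"
  define D where "D = four_block_mat e1 (0\<^sub>m 1 m) (0\<^sub>m m 1) D3"
  have Ec: "E \<in> carrier_mat ?n ?n" unfolding E_def using P3c by auto
  have Dc: "D \<in> carrier_mat ?n ?n" unfolding D_def using D3 e1c by auto
  have ET: "E\<^sup>T = four_block_mat (1\<^sub>m 1) (0\<^sub>m 1 m) (0\<^sub>m m 1) P3\<^sup>T"
    unfolding E_def by (subst transpose_four_block_mat[OF one_carrier_mat zero_carrier_mat zero_carrier_mat P3c], auto)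
  have EDE: "E * D * E\<^sup>T = B"
  proof -
    have ED: "E * D = four_block_mat e1 (0\<^sub>m 1 m) (0\<^sub>m m 1) (P3 * D3)"
      unfolding E_def D_def
      by (subst mult_four_block_mat[OF one_carrier_mat zero_carrier_mat zero_carrier_mat P3c e1c zero_carrier_mat zero_carrier_mat D3(1)], insert P3c D3 e1c, auto)
    have "E * D * E\<^sup>T = four_block_mat e1 (0\<^sub>m 1 m) (0\<^sub>m m 1) (P3 * D3 * P3\<^sup>T)"
      unfolding ET ED
      by (subst mult_four_block_mat[OF e1c zero_carrier_mat zero_carrier_mat mult_carrier_mat[OF P3c D3(1)] one_carrier_mat zero_carrier_mat zero_carrier_mat transpose_carrier_mat[THEN iffD2, OF P3c]], insert P3c D3 e1c, auto)
    thus ?thesis unfolding Bblk B3eq .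
  qed
  have EE: "E\<^sup>T * E = 1\<^sub>m ?n"
  proof -
    have "E\<^sup>T * E = four_block_mat (1\<^sub>m 1) (0\<^sub>m 1 m) (0\<^sub>m m 1) (P3\<^sup>T * P3)"
      unfolding ET unfolding E_def
      by (subst mult_four_block_mat[OF one_carrier_mat zero_carrier_mat zero_carrier_mat transpose_carrier_mat[THEN iffD2, OF P3c] one_carrier_mat zero_carrier_mat zero_carrier_mat P3c], insert P3c, auto)
    also have "\<dots> = 1\<^sub>m (1 + m)" unfolding P3P3 by (rule four_block_one_mat)
    finally show ?thesis by simp
  qed
  define P where "P = W * E"
  have Pc: "P \<in> carrier_mat ?n ?n" unfolding P_def using Wc Ec by auto
  have PP: "P\<^sup>T * P = 1\<^sub>m ?n"
  proof -
    have "P\<^sup>T * P = E\<^sup>T * (W\<^sup>T * W) * E" unfolding P_def using Wc Ec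
      by (simp add: transpose_mult[of _ ?n ?n _ ?n] assoc_mult_mat[of _ ?n ?n _ ?n _ ?n])
    also have "\<dots> = 1\<^sub>m ?n" unfolding WW using Ec EE by simp
    finally show ?thesis .
  qed
  have PP2: "P * P\<^sup>T = 1\<^sub>m ?n" using mat_mult_left_right_inverse[OF _ Pc PP] Pc by auto
  have "P * D * P\<^sup>T = W * (E * D * E\<^sup>T) * W\<^sup>T" unfolding P_def using Wc Ec Dc
    by (simp add: transpose_mult[of _ ?n ?n _ ?n] assoc_mult_mat[of _ ?n ?n _ ?n _ ?n])
  also have "\<dots> = (W * W\<^sup>T) * A * (W * W\<^sup>T)" unfolding EDE B_def using Wc A
    by (simp add: assoc_mult_mat[of _ ?n ?n _ ?n _ ?n])
  also have "\<dots> = A" unfolding WW2 using A by simp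
  finally have AP: "A = P * D * P\<^sup>T" ..
  have diagD: "diagonal_mat D" unfolding diagonal_mat_def D_def
    using D3(2) D3(1) e1c unfolding diagonal_mat_def by auto
  show ?case using Pc PP PP2 Dc diagD AP unfolding orth_mat_def by blast
qed

lemma poly_linfac_zero: "poly (\<Prod>a\<leftarrow>es. [:- a, 1:]) c = 0 \<longleftrightarrow> (c::'a::idom) \<in> set es"
proof (induction es)
  case (Cons a es)
  have "poly (\<Prod>a\<leftarrow>a # es. [:- a, 1:]) c = (c - a) * poly (\<Prod>a\<leftarrow>es. [:- a, 1:]) c"
    by (simp del: mult_pCons_left add: algebra_simps)
  thus ?case using Cons by auto
qed simp

lemma linfac_nonzero: "(\<Prod>a\<leftarrow>es. [:- a, 1:]) \<noteq> (0 :: 'a :: idom poly)"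
  by (auto simp: prod_list_zero_iff)

lemma order_linfac: "Polynomial.order c (\<Prod>a\<leftarrow>(es :: 'a :: idom list). [:- a, 1:]) = count_list es c"
proof (induction es)
  case Nil thus ?case by (simp add: order_0I)
next
  case (Cons a es)
  have "Polynomial.order c (\<Prod>a\<leftarrow>a # es. [:- a, 1:]) =
    Polynomial.order c [:- a, 1:] + Polynomial.order c (\<Prod>a\<leftarrow>es. [:- a, 1:])"
    using linfac_nonzero[of "a # es"] by (simp add: order_mult del: mult_pCons_left)
  thus ?case using Cons by (simp add: order_linear')
qed

lemma count_filter: "P x \<Longrightarrow> count_list (filter P es) x = count_list es x"
  by (induction es) auto

lemma sum_count_filter: "(\<Sum>c\<in>{c. P c \<and> c \<in> set es}. count_list es c) = length (filter P es)"
proof -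
  have S: "{c. P c \<and> c \<in> set es} = set (filter P es)" by auto
  have "(\<Sum>c\<in>{c. P c \<and> c \<in> set es}. count_list es c) = (\<Sum>c\<in>set (filter P es). count_list (filter P es) c)"
    unfolding S by (intro sum.cong refl) (auto simp: count_filter)
  also have "\<dots> = length (filter P es)" by (rule sum_count_set) auto
  finally show ?thesis .
qed

locale sdecomp =
  fixes n :: nat and A P D :: "real mat"
  assumes P: "orth_mat n P" and Dc: "D \<in> carrier_mat n n" and Ddiag: "diagonal_mat D"
    and Aeq: "A = P * D * P\<^sup>T"
begin

lemma Pc: "P \<in> carrier_mat n n" and PP: "P\<^sup>T * P = 1\<^sub>m n" and PP2: "P * P\<^sup>T = 1\<^sub>m n"
  using P unfolding orth_mat_def by auto

lemma Ac: "A \<in> carrier_mat n n" unfolding Aeq using Pc Dc by auto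

definition es where "es = diag_mat D"

lemma len_es: "length es = n" unfolding es_def diag_mat_def using Dc by simp

lemma es_nth: "i < n \<Longrightarrow> es ! i = D $$ (i,i)" unfolding es_def diag_mat_def using Dc by simp

lemma char_poly_A: "char_poly A = (\<Prod>a\<leftarrow>es. [:- a, 1:])"
proof -
  have "similar_mat_wit A D P P\<^sup>T" unfolding similar_mat_wit_def Let_def
    using Ac Pc Dc PP PP2 Aeq by auto
  hence "similar_mat A D" unfolding similar_mat_def by blast
  hence "char_poly A = char_poly D" by (rule char_poly_similar)
  also have "\<dots> = (\<Prod>a\<leftarrow>es. [:- a, 1:])" unfolding es_def
    by (rule char_poly_upper_triangular[OF Dc]) (use Ddiag Dc in \<open>auto simp: diagonal_mat_def upper_triangular_def\<close>)
  finally show ?thesis .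
qed

lemma eig_iff: "eigenvalue A c \<longleftrightarrow> c \<in> set es"
  using eigenvalue_root_char_poly[OF Ac] unfolding char_poly_A poly_linfac_zero .

lemma num_pos: "num_pos_eig A = length (filter (\<lambda>e. e > 0) es)"
  unfolding num_pos_eig_def eig_iff char_poly_A order_linfac by (rule sum_count_filter)

lemma num_neg: "num_neg_eig A = length (filter (\<lambda>e. e < 0) es)"
  unfolding num_neg_eig_def eig_iff char_poly_A order_linfac by (rule sum_count_filter)

lemma qf_decomp: assumes x: "x \<in> carrier_vec n"
  shows "x \<bullet> (A *\<^sub>v x) = (\<Sum>i<n. es ! i * ((P\<^sup>T *\<^sub>v x) $ i)^2)"
proof -
  define y where "y = P\<^sup>T *\<^sub>v x"
  have y: "y \<in> carrier_vec n" unfolding y_def using Pc x by auto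
  have "A *\<^sub>v x = P *\<^sub>v (D *\<^sub>v y)" unfolding Aeq y_def using Pc Dc x
    by (simp add: assoc_mult_mat_vec[of _ n n _ n])
  moreover have "y \<bullet> (D *\<^sub>v y) = x \<bullet> (P *\<^sub>v (D *\<^sub>v y))"
    using transpose_vec_mult_scalar[OF Pc _ x, of "D *\<^sub>v y"] Dc y unfolding y_def by auto
  ultimately have "x \<bullet> (A *\<^sub>v x) = y \<bullet> (D *\<^sub>v y)" by simp
  also have "\<dots> = (\<Sum>i<n. y $ i * (D $$ (i,i) * y $ i))"
  proof -
    have "(D *\<^sub>v y) $ i = D $$ (i,i) * y $ i" if "i < n" for i
    proof -
      have "(D *\<^sub>v y) $ i = (\<Sum>j\<in>{0..<n}. D $$ (i,j) * y $ j)"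
        using that Dc y by (simp add: scalar_prod_def)
      also have "\<dots> = (\<Sum>j\<in>{i}. D $$ (i,j) * y $ j)"
        by (rule sum.mono_neutral_right) (use that Ddiag Dc in \<open>auto simp: diagonal_mat_def\<close>)
      finally show ?thesis by simp
    qed
    thus ?thesis using y Dc by (simp add: scalar_prod_def lessThan_atLeast0)
  qed
  finally show ?thesis unfolding y_def by (simp add: es_nth power2_eq_square mult.commute mult.left_commute)
qed

end

lemma exists_orth_vec:
  fixes ws :: "real vec list"
  assumes ws: "set ws \<subseteq> carrier_vec k" and len: "length ws < k"
  shows "\<exists>y. y \<in> carrier_vec k \<and> y \<noteq> 0\<^sub>v k \<and> (\<forall>w\<in>set ws. w \<bullet> y = 0)"
proof -
  define c where "c i = (if i < length ws then ws ! i else 0\<^sub>v k)" for i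
  have cc: "c i \<in> carrier_vec k" for i unfolding c_def using ws by auto
  have "det (mat\<^sub>r k k (\<lambda>i. if i = k - 1 then 0\<^sub>v k else c i)) = 0"
    by (rule det_row_0) (use len cc in auto)
  moreover have "(\<lambda>i. if i = k - 1 then 0\<^sub>v k else c i) = c"
    using len unfolding c_def by (intro ext) auto
  ultimately have "det (mat\<^sub>r k k c) = 0" by simp
  then obtain v where v: "v \<in> carrier_vec k" "v \<noteq> 0\<^sub>v k" "mat\<^sub>r k k c *\<^sub>v v = 0\<^sub>v k"
    using det_0_iff_vec_prod_zero_field[of "mat\<^sub>r k k c" k] by auto
  have "w \<bullet> v = 0" if "w \<in> set ws" for w
  proof -
    obtain i where i: "i < length ws" "w = ws ! i" using \<open>w \<in> set ws\<close> by (auto simp: in_set_conv_nth)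
    have "(mat\<^sub>r k k c *\<^sub>v v) $ i = c i \<bullet> v" using i len cc by (simp add: row_mat_of_row_fun)
    thus ?thesis using v(3) i len unfolding c_def by auto
  qed
  thus ?thesis using v by blast
qed

lemma length_filter_nth: "length (filter P xs) = length (filter (\<lambda>i. P (xs ! i)) [0..<length xs])"
proof -
  have "xs = map (\<lambda>i. xs ! i) [0..<length xs]" by (simp add: map_nth)
  hence "filter P xs = filter P (map (\<lambda>i. xs ! i) [0..<length xs])" by simp
  thus ?thesis by (simp add: filter_map comp_def)
qed

context sdecomp begin

lemma pos_le:
  assumes W: "set W \<subseteq> carrier_vec n"
    and H: "\<And>x. x \<in> carrier_vec n \<Longrightarrow> (\<forall>w\<in>set W. w \<bullet> x = 0) \<Longrightarrow> x \<bullet> (A *\<^sub>v x) \<le> 0"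
  shows "length (filter (\<lambda>e. e > 0) es) \<le> length W"
proof (rule ccontr)
  assume "\<not> ?thesis"
  hence lt: "length W < length (filter (\<lambda>e. e > 0) es)" by simp
  define J where "J = filter (\<lambda>i. \<not> es ! i > 0) [0..<n]"
  have lenJ: "length J + length (filter (\<lambda>e. e > 0) es) = n"
    unfolding J_def length_filter_nth[of _ es] len_es
    using sum_length_filter_compl[of "\<lambda>i. es ! i > 0" "[0..<n]"] by simp
  define ws where "ws = map (\<lambda>w. P\<^sup>T *\<^sub>v w) W @ map (unit_vec n) J"
  have wsc: "set ws \<subseteq> carrier_vec n" unfolding ws_def using W Pc by auto
  have "length ws < n" unfolding ws_def using lt lenJ by simp
  from exists_orth_vec[OF wsc this] obtain y where
    y: "y \<in> carrier_vec n" "y \<noteq> 0\<^sub>v n" and orth: "\<forall>w\<in>set ws. w \<bullet> y = 0" by blast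
  define x where "x = P *\<^sub>v y"
  have x: "x \<in> carrier_vec n" unfolding x_def using Pc y by auto
  have Px: "P\<^sup>T *\<^sub>v x = y" unfolding x_def using Pc y
    by (simp add: assoc_mult_mat_vec[symmetric, of _ n n _ n] PP)
  have "\<forall>w\<in>set W. w \<bullet> x = 0"
  proof
    fix w assume w: "w \<in> set W"
    have "w \<bullet> x = (P\<^sup>T *\<^sub>v w) \<bullet> y" unfolding x_def
      using transpose_vec_mult_scalar[OF Pc y(1), of w] W w by auto
    also have "\<dots> = 0" using orth w unfolding ws_def by auto
    finally show "w \<bullet> x = 0" .
  qed
  from H[OF x this] have le: "x \<bullet> (A *\<^sub>v x) \<le> 0" .
  have yJ: "y $ i = 0" if "i < n" "\<not> es ! i > 0" for i
  proof -
    have "unit_vec n i \<in> set ws" unfolding ws_def J_def using that by auto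
    hence "unit_vec n i \<bullet> y = 0" using orth by auto
    thus ?thesis using that y by simp
  qed
  from y obtain i where i: "i < n" "y $ i \<noteq> 0" by (metis carrier_vecD eq_vecI index_zero_vec)
  hence esi: "es ! i > 0" using yJ by force
  have nonneg: "\<forall>j\<in>{..<n}. 0 \<le> es ! j * (y $ j)^2" 
  proof
    fix j assume "j \<in> {..<n}"
    thus "0 \<le> es ! j * (y $ j)^2" using yJ[of j] by (cases "es ! j > 0") auto
  qed
  have "0 < es ! i * (y $ i)^2" using esi i by simp
  also have "\<dots> \<le> (\<Sum>j<n. es ! j * (y $ j)^2)"
    by (rule member_le_sum) (use i nonneg in auto)
  also have "\<dots> = x \<bullet> (A *\<^sub>v x)" using qf_decomp[OF x] Px by simp
  finally show False using le by simp
qed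

lemma pos_ge:
  assumes U: "set U \<subseteq> carrier_vec n"
    and H: "\<And>c. c \<in> carrier_vec (length U) \<Longrightarrow> c \<noteq> 0\<^sub>v (length U) \<Longrightarrow>
       (mat_of_cols n U *\<^sub>v c) \<bullet> (A *\<^sub>v (mat_of_cols n U *\<^sub>v c)) > 0"
  shows "length U \<le> length (filter (\<lambda>e. e > 0) es)"
proof (rule ccontr)
  assume "\<not> ?thesis"
  hence lt: "length (filter (\<lambda>e. e > 0) es) < length U" by simp
  define k where "k = length U"
  define M where "M = mat_of_cols n U"
  have Mc: "M \<in> carrier_mat n k" unfolding M_def k_def by simp
  define I where "I = filter (\<lambda>i. es ! i > 0) [0..<n]"
  have lenI: "length I = length (filter (\<lambda>e. e > 0) es)"
    unfolding I_def length_filter_nth[of _ es] len_es ..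
  define ws where "ws = map (\<lambda>i. row (P\<^sup>T * M) i) I"
  have wsc: "set ws \<subseteq> carrier_vec k" unfolding ws_def I_def using Pc Mc by (auto simp: row_def)
  have "length ws < k" unfolding ws_def k_def using lt lenI by simp
  from exists_orth_vec[OF wsc this] obtain c where
    c: "c \<in> carrier_vec k" "c \<noteq> 0\<^sub>v k" and orth: "\<forall>w\<in>set ws. w \<bullet> c = 0" by blast
  define x where "x = M *\<^sub>v c"
  have x: "x \<in> carrier_vec n" unfolding x_def using Mc c by auto
  have pos: "x \<bullet> (A *\<^sub>v x) > 0" using H[of c] c unfolding x_def M_def k_def by auto
  define y where "y = P\<^sup>T *\<^sub>v x"
  have yi: "y $ i = row (P\<^sup>T * M) i \<bullet> c" if "i < n" for i
  proof -
    have "y = (P\<^sup>T * M) *\<^sub>v c" unfolding y_def x_def using Pc Mc c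
      by (simp add: assoc_mult_mat_vec[of _ n n _ k])
    thus ?thesis using that Pc Mc by simp
  qed
  have yI: "y $ i = 0" if "i < n" "es ! i > 0" for i
  proof -
    have "row (P\<^sup>T * M) i \<in> set ws" unfolding ws_def I_def using that by auto
    thus ?thesis using orth yi[OF that(1)] by auto
  qed
  have "x \<bullet> (A *\<^sub>v x) = (\<Sum>j<n. es ! j * (y $ j)^2)" using qf_decomp[OF x] unfolding y_def .
  also have "\<dots> \<le> 0"
  proof (rule sum_nonpos)
    fix j assume "j \<in> {..<n}"
    thus "es ! j * (y $ j)^2 \<le> 0" using yI[of j] by (cases "es ! j > 0") (auto simp: mult_nonpos_nonneg)
  qed
  finally show False using pos by simp
qed

end

lemma sdecomp_neg: "sdecomp n A P D \<Longrightarrow> sdecomp n (-A) P (-D)"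
  unfolding sdecomp_def
  by (auto simp: diagonal_mat_def mult_smult_distrib[symmetric] orth_mat_def)

lemma rank_sum_outer:
  fixes f g :: "nat \<Rightarrow> nat \<Rightarrow> real"
  assumes "finite S"
  shows "vec_space.rank n (mat n n (\<lambda>(r,c). \<Sum>i\<in>S. f i r * g i c)) \<le> card S"
  using assms
proof (induction S rule: finite_induct)
  case empty
  interpret vec_space "TYPE(real)" n .
  have "rank (0\<^sub>m n n :: real mat) = 0" by (rule rank_0I)
  thus ?case unfolding zero_mat_def by simp
next
  case (insert x S)
  interpret vec_space "TYPE(real)" n .
  have "mat n n (\<lambda>(r,c). \<Sum>i\<in>insert x S. f i r * g i c) =
    mat n n (\<lambda>(r,c). f x r * g x c) + mat n n (\<lambda>(r,c). \<Sum>i\<in>S. f i r * g i c)"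
    using insert by (intro eq_matI) auto
  moreover have "rank (mat n n (\<lambda>(r,c). f x r * g x c)) \<le> 1"
    by (rule rank_le_1_product_entries[where f="f x" and g="g x"]) auto
  moreover have "rank (mat n n (\<lambda>(r,c). f x r * g x c) + mat n n (\<lambda>(r,c). \<Sum>i\<in>S. f i r * g i c))
     \<le> rank (mat n n (\<lambda>(r,c). f x r * g x c)) + rank (mat n n (\<lambda>(r,c). \<Sum>i\<in>S. f i r * g i c))"
    by (rule rank_subadditive) auto
  ultimately show ?case using insert by simp
qed

lemma PdP:
  fixes P :: "real mat"
  assumes Pc: "P \<in> carrier_mat n n"
  shows "P * mat n n (\<lambda>(i,j). if i = j then d i else 0) * P\<^sup>T =
    mat n n (\<lambda>(r,c). \<Sum>i<n. P $$ (r,i) * d i * P $$ (c,i))"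
proof (rule eq_matI)
  fix r c assume rc: "r < dim_row (mat n n (\<lambda>(r,c). \<Sum>i<n. P $$ (r,i) * d i * P $$ (c,i)))"
    "c < dim_col (mat n n (\<lambda>(r,c). \<Sum>i<n. P $$ (r,i) * d i * P $$ (c,i)))"
  hence r: "r < n" and c: "c < n" by auto
  have PD: "(P * mat n n (\<lambda>(i,j). if i = j then d i else 0)) $$ (r,i) = P $$ (r,i) * d i" if "i < n" for i
  proof -
    have "(P * mat n n (\<lambda>(i,j). if i = j then d i else 0)) $$ (r,i) = (\<Sum>k\<in>{0..<n}. P $$ (r,k) * (if k = i then d i else 0))"
      using Pc r that by (auto simp: scalar_prod_def intro!: sum.cong)
    also have "\<dots> = P $$ (r,i) * d i"
      by (simp add: if_distrib[of "\<lambda>x. _ * x"] sum.delta that cong: if_cong)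
    finally show ?thesis .
  qed
  have "(P * mat n n (\<lambda>(i,j). if i = j then d i else 0) * P\<^sup>T) $$ (r,c) =
     (\<Sum>i\<in>{0..<n}. (P * mat n n (\<lambda>(i,j). if i = j then d i else 0)) $$ (r,i) * P $$ (c,i))"
    using Pc r c by (simp add: scalar_prod_def)
  also have "\<dots> = (\<Sum>i<n. P $$ (r,i) * d i * P $$ (c,i))"
    by (simp add: PD lessThan_atLeast0)
  finally show "(P * mat n n (\<lambda>(i,j). if i = j then d i else 0) * P\<^sup>T) $$ (r,c) =
      mat n n (\<lambda>(r,c). \<Sum>i<n. P $$ (r,i) * d i * P $$ (c,i)) $$ (r,c)" using r c by simp
qed (use Pc in auto)

context sdecomp begin

lemma D_eq: "D = mat n n (\<lambda>(i,j). if i = j then es ! i else 0)"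
  by (rule eq_matI) (use Dc Ddiag in \<open>auto simp: es_nth diagonal_mat_def\<close>)

lemma rank_psd:
  assumes nn: "\<forall>e\<in>set es. e \<ge> 0"
  shows "vec_space.rank n A = length (filter (\<lambda>e. e > 0) es)"
proof -
  interpret vec_space "TYPE(real)" n .
  define Sp where "Sp = {i. i < n \<and> es ! i > 0}"
  define Sz where "Sz = {i. i < n \<and> \<not> es ! i > 0}"
  have cardSp: "card Sp = length (filter (\<lambda>e. e > 0) es)"
  proof -
    have "Sp = set (filter (\<lambda>i. es ! i > 0) [0..<n])" unfolding Sp_def by auto
    hence "card Sp = length (filter (\<lambda>i. es ! i > 0) [0..<n])"
      using distinct_card[of "filter (\<lambda>i. es ! i > 0) [0..<n]"] by simp
    thus ?thesis using length_filter_nth[of _ es] len_es by simp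
  qed
  have cardSz: "card Sz + card Sp = n"
  proof -
    have "Sz \<union> Sp = {..<n}" "Sz \<inter> Sp = {}" unfolding Sz_def Sp_def by auto
    thus ?thesis by (metis card_Un_disjoint card_lessThan finite_Un finite_lessThan)
  qed
  have es0: "es ! i = 0" if "i \<in> Sz" for i using that nn len_es unfolding Sz_def
    by (metis le_less mem_Collect_eq nth_mem)
  have Aeq2: "A = mat n n (\<lambda>(r,c). \<Sum>i<n. P $$ (r,i) * es ! i * P $$ (c,i))"
    unfolding Aeq by (subst D_eq, rule PdP[OF Pc])
  have ASp: "A = mat n n (\<lambda>(r,c). \<Sum>i\<in>Sp. P $$ (r,i) * (es ! i * P $$ (c,i)))"
    unfolding Aeq2
  proof (intro eq_matI)
    fix r c assume "r < dim_row (mat n n (\<lambda>(r,c). \<Sum>i\<in>Sp. P $$ (r,i) * (es ! i * P $$ (c,i))))"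
      "c < dim_col (mat n n (\<lambda>(r,c). \<Sum>i\<in>Sp. P $$ (r,i) * (es ! i * P $$ (c,i))))"
    hence rc: "r < n" "c < n" by auto
    have "(\<Sum>i<n. P $$ (r,i) * es ! i * P $$ (c,i)) = (\<Sum>i\<in>Sp. P $$ (r,i) * es ! i * P $$ (c,i))"
      by (rule sum.mono_neutral_right) (use es0 in \<open>auto simp: Sp_def Sz_def\<close>)
    thus "mat n n (\<lambda>(r,c). \<Sum>i<n. P $$ (r,i) * es ! i * P $$ (c,i)) $$ (r,c) =
          mat n n (\<lambda>(r,c). \<Sum>i\<in>Sp. P $$ (r,i) * (es ! i * P $$ (c,i))) $$ (r,c)"
      using rc by (simp add: mult.assoc)
  qed auto
  have le: "rank A \<le> card Sp" unfolding ASp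
    by (rule rank_sum_outer) (auto simp: Sp_def)
  define N where "N = mat n n (\<lambda>(r,c). \<Sum>i\<in>Sz. P $$ (r,i) * P $$ (c,i))"
  have Nc: "N \<in> carrier_mat n n" unfolding N_def by simp
  have rN: "rank N \<le> card Sz" unfolding N_def
    using rank_sum_outer[of Sz n "\<lambda>i r. P $$ (r,i)" "\<lambda>i c. P $$ (c,i)"] by (auto simp: Sz_def)
  define d where "d i = (if es ! i > 0 then es ! i else 1)" for i
  have AN: "A + N = P * mat n n (\<lambda>(i,j). if i = j then d i else 0) * P\<^sup>T"
    unfolding PdP[OF Pc]
  proof (intro eq_matI)
    fix r c assume "r < dim_row (mat n n (\<lambda>(r,c). \<Sum>i<n. P $$ (r,i) * d i * P $$ (c,i)))"
      "c < dim_col (mat n n (\<lambda>(r,c). \<Sum>i<n. P $$ (r,i) * d i * P $$ (c,i)))"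
    hence rc: "r < n" "c < n" by auto
    have split: "{..<n} = Sp \<union> Sz" "Sp \<inter> Sz = {}" unfolding Sp_def Sz_def by auto
    have "(\<Sum>i<n. P $$ (r,i) * d i * P $$ (c,i)) =
      (\<Sum>i\<in>Sp. P $$ (r,i) * d i * P $$ (c,i)) + (\<Sum>i\<in>Sz. P $$ (r,i) * d i * P $$ (c,i))"
      unfolding split(1) by (rule sum.union_disjoint) (use split in \<open>auto simp: Sp_def Sz_def\<close>)
    also have "(\<Sum>i\<in>Sp. P $$ (r,i) * d i * P $$ (c,i)) = (\<Sum>i\<in>Sp. P $$ (r,i) * (es ! i * P $$ (c,i)))"
      by (intro sum.cong) (auto simp: d_def Sp_def)
    also have "(\<Sum>i\<in>Sz. P $$ (r,i) * d i * P $$ (c,i)) = (\<Sum>i\<in>Sz. P $$ (r,i) * P $$ (c,i))"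
      by (intro sum.cong) (auto simp: d_def Sz_def)
    finally show "(A + N) $$ (r,c) = mat n n (\<lambda>(r,c). \<Sum>i<n. P $$ (r,i) * d i * P $$ (c,i)) $$ (r,c)"
      using rc by (subst ASp) (simp add: N_def)
  qed (auto simp: N_def Ac)
  have "det (A + N) \<noteq> 0"
  proof -
    define Dd where "Dd = mat n n (\<lambda>(i,j). if i = j then d i else (0::real))"
    have Ddc: "Dd \<in> carrier_mat n n" unfolding Dd_def by simp
    have "det (A + N) = det P * det Dd * det P\<^sup>T"
      unfolding AN Dd_def[symmetric] using Pc Ddc by (simp add: det_mult[of _ n])
    also have "det P * det P\<^sup>T = 1"
      using det_mult[OF transpose_carrier_mat[THEN iffD2, OF Pc] Pc] PP det_transpose[OF Pc] by simp
    moreover have "det Dd \<noteq> 0"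
    proof -
      have "det Dd = prod_list (diag_mat Dd)"
        by (rule det_upper_triangular[OF _ Ddc]) (auto simp: upper_triangular_def Dd_def)
      also have "\<dots> = (\<Prod>i = 0..<n. Dd $$ (i,i))" using prod_list_diag_prod[of Dd] Ddc by simp
      also have "\<dots> \<noteq> 0" unfolding Dd_def by (auto simp: d_def)
      finally show ?thesis .
    qed
    ultimately show ?thesis by (simp add: mult.commute mult.left_commute)
  qed
  hence "rank (A + N) = n" using det_rank_iff[of "A + N"] Ac Nc by auto
  moreover have "rank (A + N) \<le> rank A + rank N" by (rule rank_subadditive[OF Ac Nc])
  ultimately have "rank A \<ge> card Sp" using rN cardSz by linarith
  with le cardSp show ?thesis by simp
qed

end

definition coefs :: "nat \<Rightarrow> (real \<times> real \<times> real) list \<Rightarrow> nat \<Rightarrow> real" where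
  "coefs N R j = (\<Sum>t\<leftarrow>R. fst t * fst (snd t) ^ (N - j) * snd (snd t) ^ j)"

lemma coefs_Nil[simp]: "coefs N [] j = 0" unfolding coefs_def by simp
lemma coefs_Cons[simp]: "coefs N (t # R) j = fst t * fst (snd t) ^ (N - j) * snd (snd t) ^ j + coefs N R j"
  unfolding coefs_def by simp

lemma binom_expand: "((al::real) * x + be * y) ^ N =
  (\<Sum>j=0..N. real (N choose j) * al ^ (N - j) * be ^ j * x ^ (N - j) * y ^ j)"
proof -
  have "(al * x + be * y) ^ N = (be * y + al * x) ^ N" by (simp add: add.commute)
  also have "\<dots> = (\<Sum>k\<le>N. real (N choose k) * (be * y) ^ k * (al * x) ^ (N - k))"
    by (rule binomial_ring)
  also have "\<dots> = (\<Sum>j=0..N. real (N choose j) * al ^ (N - j) * be ^ j * x ^ (N - j) * y ^ j)"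
    by (simp add: atLeast0AtMost power_mult_distrib mult_ac)
  finally show ?thesis .
qed

lemma form_list: "(\<Sum>t\<leftarrow>R. fst t * (fst (snd t) * x + snd (snd t) * y) ^ N) =
  (\<Sum>j=0..N. real (N choose j) * coefs N R j * x ^ (N - j) * y ^ j)"
proof (induction R)
  case Nil thus ?case by simp
next
  case (Cons t R)
  have "(\<Sum>t\<leftarrow>t # R. fst t * (fst (snd t) * x + snd (snd t) * y) ^ N) =
    fst t * (fst (snd t) * x + snd (snd t) * y) ^ N + (\<Sum>t\<leftarrow>R. fst t * (fst (snd t) * x + snd (snd t) * y) ^ N)"
    by simp
  also have "\<dots> = fst t * (\<Sum>j=0..N. real (N choose j) * fst (snd t) ^ (N - j) * snd (snd t) ^ j * x ^ (N - j) * y ^ j)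
      + (\<Sum>j=0..N. real (N choose j) * coefs N R j * x ^ (N - j) * y ^ j)"
    by (subst Cons.IH, subst binom_expand, rule refl)
  also have "\<dots> = (\<Sum>j=0..N. fst t * (real (N choose j) * fst (snd t) ^ (N - j) * snd (snd t) ^ j * x ^ (N - j) * y ^ j)
      + real (N choose j) * coefs N R j * x ^ (N - j) * y ^ j)"
    by (simp only: sum_distrib_left sum.distrib)
  also have "\<dots> = (\<Sum>j=0..N. real (N choose j) * coefs N (t # R) j * x ^ (N - j) * y ^ j)"
    by (intro sum.cong refl) (simp only: coefs_Cons distrib_left distrib_right mult_ac)
  finally show ?case .
qed

lemma is_repr_iff: "is_repr s a R \<longleftrightarrow> (\<forall>t\<in>set R. fst t \<noteq> 0) \<and> (\<forall>j\<le>2*s. a j = coefs (2*s) R j)"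
proof
  assume r: "is_repr s a R"
  hence eq: "\<And>x y. form_eval s a x y = (\<Sum>j=0..2*s. real ((2*s) choose j) * coefs (2*s) R j * x ^ (2*s - j) * y ^ j)"
    unfolding is_repr_def form_list by auto
  have "\<forall>y. (\<Sum>j\<le>2*s. (real ((2*s) choose j) * a j) * y ^ j) = (\<Sum>j\<le>2*s. (real ((2*s) choose j) * coefs (2*s) R j) * y ^ j)"
    using eq[of 1] unfolding form_eval_def by (simp add: atLeast0AtMost mult_ac)
  hence "\<forall>j\<le>2*s. real ((2*s) choose j) * a j = real ((2*s) choose j) * coefs (2*s) R j"
    by (subst (asm) polyfun_eq_coeffs) 
  hence "\<forall>j\<le>2*s. a j = coefs (2*s) R j" by auto
  thus "(\<forall>t\<in>set R. fst t \<noteq> 0) \<and> (\<forall>j\<le>2*s. a j = coefs (2*s) R j)" using r unfolding is_repr_def by auto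
next
  assume h: "(\<forall>t\<in>set R. fst t \<noteq> 0) \<and> (\<forall>j\<le>2*s. a j = coefs (2*s) R j)"
  show "is_repr s a R" unfolding is_repr_def form_list
  proof (intro conjI allI)
    fix x y
    show "form_eval s a x y = (\<Sum>j=0..2*s. real ((2*s) choose j) * coefs (2*s) R j * x ^ (2*s - j) * y ^ j)"
      unfolding form_eval_def using h by (intro sum.cong) auto
  qed (use h in auto)
qed

lemma in_Q_repr: "in_Q s a \<Longrightarrow> \<exists>L. is_repr s a (map (\<lambda>l. (1, l)) L)"
  unfolding in_Q_def is_repr_def by (auto simp: comp_def)

lemma sum_swap3: "(\<Sum>i\<in>I. \<Sum>j\<in>J. \<Sum>k\<in>K. f i j k) = (\<Sum>k\<in>K. \<Sum>i\<in>I. \<Sum>j\<in>J. f i j k)"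
proof -
  have "(\<Sum>i\<in>I. \<Sum>j\<in>J. \<Sum>k\<in>K. f i j k) = (\<Sum>i\<in>I. \<Sum>k\<in>K. \<Sum>j\<in>J. f i j k)"
    by (rule sum.cong[OF refl], rule sum.swap)
  also have "\<dots> = (\<Sum>k\<in>K. \<Sum>i\<in>I. \<Sum>j\<in>J. f i j k)" by (rule sum.swap)
  finally show ?thesis .
qed

definition mvec :: "nat \<Rightarrow> real \<Rightarrow> real \<Rightarrow> real vec" where
  "mvec s al be = vec (s+1) (\<lambda>i. al ^ (s - i) * be ^ i)"

lemma mvec_c[simp]: "mvec s al be \<in> carrier_vec (s+1)" unfolding mvec_def by simp
lemma mvec_c'[simp]: "mvec s al be \<in> carrier_vec (Suc s)" unfolding mvec_def by simp

lemma hankel_c[simp]: "hankel s a \<in> carrier_mat (s+1) (s+1)" unfolding hankel_def by simp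

lemma hankel_sym: "(hankel s a)\<^sup>T = hankel s a"
  unfolding hankel_def by (rule eq_matI) (auto simp: add.commute)

lemma hankel_qf:
  assumes a: "\<forall>j\<le>2*s. a j = coefs (2*s) R j" and x: "x \<in> carrier_vec (s+1)"
  shows "x \<bullet> (hankel s a *\<^sub>v x) = (\<Sum>t\<leftarrow>R. fst t * (mvec s (fst (snd t)) (snd (snd t)) \<bullet> x)^2)"
proof -
  let ?m = "length R"
  let ?l = "\<lambda>k. fst (R ! k)" and ?al = "\<lambda>k. fst (snd (R ! k))" and ?be = "\<lambda>k. snd (snd (R ! k))"
  have aij: "a (i + j) = (\<Sum>k<?m. ?l k * (?al k ^ (s - i) * ?be k ^ i) * (?al k ^ (s - j) * ?be k ^ j))"
    if "i \<le> s" "j \<le> s" for i j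
  proof -
    have "a (i + j) = coefs (2*s) R (i + j)" using a that by auto
    also have "\<dots> = (\<Sum>k<?m. ?l k * ?al k ^ (2*s - (i+j)) * ?be k ^ (i+j))"
      unfolding coefs_def sum_list_sum_nth by (simp add: atLeast0LessThan)
    also have "\<dots> = (\<Sum>k<?m. ?l k * (?al k ^ (s - i) * ?be k ^ i) * (?al k ^ (s - j) * ?be k ^ j))"
    proof (intro sum.cong refl)
      fix k
      have "2*s - (i+j) = (s - i) + (s - j)" using that by simp
      thus "?l k * ?al k ^ (2*s - (i+j)) * ?be k ^ (i+j) = ?l k * (?al k ^ (s - i) * ?be k ^ i) * (?al k ^ (s - j) * ?be k ^ j)"
        by (simp add: power_add mult_ac)
    qed
    finally show ?thesis .
  qed
  have mx: "mvec s (?al k) (?be k) \<bullet> x = (\<Sum>i<s+1. ?al k ^ (s - i) * ?be k ^ i * x $ i)" for k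
    unfolding mvec_def scalar_prod_def using x by (simp add: atLeast0LessThan del: sum.lessThan_Suc)
  have "x \<bullet> (hankel s a *\<^sub>v x) = (\<Sum>i<s+1. x $ i * (\<Sum>j<s+1. a (i + j) * x $ j))"
    using x unfolding hankel_def by (simp add: scalar_prod_def atLeast0LessThan del: sum.lessThan_Suc)
  also have "\<dots> = (\<Sum>i<s+1. \<Sum>j<s+1. \<Sum>k<?m. ?l k * ((?al k ^ (s - i) * ?be k ^ i * x $ i) * (?al k ^ (s - j) * ?be k ^ j * x $ j)))"
  proof (intro sum.cong refl)
    fix i assume i: "i \<in> {..<s+1}"
    have "x $ i * (\<Sum>j<s+1. a (i + j) * x $ j) = (\<Sum>j<s+1. x $ i * (a (i + j) * x $ j))"
      by (simp add: sum_distrib_left del: sum.lessThan_Suc)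
    also have "\<dots> = (\<Sum>j<s+1. \<Sum>k<?m. ?l k * ((?al k ^ (s - i) * ?be k ^ i * x $ i) * (?al k ^ (s - j) * ?be k ^ j * x $ j)))"
    proof (intro sum.cong refl)
      fix j assume j: "j \<in> {..<s+1}"
      show "x $ i * (a (i + j) * x $ j) = (\<Sum>k<?m. ?l k * ((?al k ^ (s - i) * ?be k ^ i * x $ i) * (?al k ^ (s - j) * ?be k ^ j * x $ j)))"
        using i j by (simp add: aij sum_distrib_left sum_distrib_right mult_ac del: sum.lessThan_Suc)
    qed
    finally show "x $ i * (\<Sum>j<s+1. a (i + j) * x $ j) = (\<Sum>j<s+1. \<Sum>k<?m. ?l k * ((?al k ^ (s - i) * ?be k ^ i * x $ i) * (?al k ^ (s - j) * ?be k ^ j * x $ j)))" .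
  qed
  also have "\<dots> = (\<Sum>k<?m. ?l k * ((\<Sum>i<s+1. ?al k ^ (s - i) * ?be k ^ i * x $ i) * (\<Sum>j<s+1. ?al k ^ (s - j) * ?be k ^ j * x $ j)))"
  proof -
    have "(\<Sum>i<s+1. \<Sum>j<s+1. \<Sum>k<?m. ?l k * ((?al k ^ (s - i) * ?be k ^ i * x $ i) * (?al k ^ (s - j) * ?be k ^ j * x $ j)))
      = (\<Sum>k<?m. \<Sum>i<s+1. \<Sum>j<s+1. ?l k * ((?al k ^ (s - i) * ?be k ^ i * x $ i) * (?al k ^ (s - j) * ?be k ^ j * x $ j)))"
      by (rule sum_swap3)
    also have "\<dots> = (\<Sum>k<?m. ?l k * ((\<Sum>i<s+1. ?al k ^ (s - i) * ?be k ^ i * x $ i) * (\<Sum>j<s+1. ?al k ^ (s - j) * ?be k ^ j * x $ j)))"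
      unfolding sum_product unfolding sum_distrib_left ..
    finally show ?thesis .
  qed
  also have "\<dots> = (\<Sum>k<?m. ?l k * (mvec s (?al k) (?be k) \<bullet> x)^2)"
    unfolding mx by (simp add: power2_eq_square)
  also have "\<dots> = (\<Sum>t\<leftarrow>R. fst t * (mvec s (fst (snd t)) (snd (snd t)) \<bullet> x)^2)"
    unfolding sum_list_sum_nth by (simp add: atLeast0LessThan)
  finally show ?thesis .
qed

lemma vandermonde:
  fixes al be c :: "nat \<Rightarrow> real"
  assumes "m \<le> s + 1"
    and np: "\<forall>j<m. \<forall>k<m. j \<noteq> k \<longrightarrow> al j * be k \<noteq> be j * al k"
    and nz: "\<forall>k<m. al k \<noteq> 0 \<or> be k \<noteq> 0"
    and eq: "\<forall>i\<le>s. (\<Sum>k<m. c k * (al k ^ (s - i) * be k ^ i)) = 0"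
  shows "\<forall>k<m. c k = 0"
  using assms
proof (induction m arbitrary: s c)
  case 0 thus ?case by simp
next
  case (Suc m s c)
  show ?case
  proof (cases s)
    case 0
    with Suc.prems(1) have m0: "m = 0" by simp
    from Suc.prems(4) have "(\<Sum>k<Suc m. c k * (al k ^ (s - 0) * be k ^ 0)) = 0" by blast
    thus ?thesis using m0 0 by simp
  next
    case (Suc s')
    note prems = Suc.prems
    define c' where "c' k = c k * (be m * al k - al m * be k)" for k
    have E: "(\<Sum>k<m. c k * (al k ^ (s - i) * be k ^ i)) = - (c m * (al m ^ (s - i) * be m ^ i))"
      if "i \<le> s" for i
      using prems(4)[rule_format, OF that] by simp
    have eq': "\<forall>i\<le>s'. (\<Sum>k<m. c' k * (al k ^ (s' - i) * be k ^ i)) = 0"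
    proof (intro allI impI)
      fix i assume i: "i \<le> s'"
      have si: "s - i = Suc (s' - i)" "s - Suc i = s' - i" using i Suc by auto
      have "(\<Sum>k<m. c' k * (al k ^ (s' - i) * be k ^ i)) =
          be m * (\<Sum>k<m. c k * (al k ^ (s - i) * be k ^ i)) - al m * (\<Sum>k<m. c k * (al k ^ (s - Suc i) * be k ^ Suc i))"
        unfolding c'_def si by (simp add: sum_distrib_left sum_subtractf[symmetric] algebra_simps)
      also have "\<dots> = be m * (- (c m * (al m ^ (s - i) * be m ^ i))) - al m * (- (c m * (al m ^ (s - Suc i) * be m ^ Suc i)))"
        using E[of i] E[of "Suc i"] i Suc by simp
      also have "\<dots> = 0" unfolding si by (simp add: algebra_simps)
      finally show "(\<Sum>k<m. c' k * (al k ^ (s' - i) * be k ^ i)) = 0" .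
    qed
    have "\<forall>k<m. c' k = 0"
      by (rule Suc.IH[of s' c']) (use prems Suc eq' in auto)
    hence ck: "c k = 0" if "k < m" for k
    proof -
      have "al k * be m \<noteq> be k * al m" using prems(2) that by auto
      hence "be m * al k - al m * be k \<noteq> 0" by (simp add: algebra_simps)
      thus ?thesis using \<open>\<forall>k<m. c' k = 0\<close> that unfolding c'_def by auto
    qed
    have cm: "c m * (al m ^ (s - i) * be m ^ i) = 0" if "i \<le> s" for i
      using E[OF that] ck by simp
    show ?thesis
    proof (cases "c m = 0")
      case True thus ?thesis using ck by (auto simp: less_Suc_eq)
    next
      case False
      from cm[of 0] False have "al m = 0" by simp
      moreover from cm[of s] False have "be m = 0" using Suc by auto
      ultimately show ?thesis using prems(3) by auto
    qed
  qed
qed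

lemma hankel_decomp: "\<exists>P D. sdecomp (s+1) (hankel s a) P D"
  using spectral[OF hankel_c hankel_sym] unfolding sdecomp_def by blast

lemma num_neg_hankel: "num_neg_eig (hankel s a) = num_pos_eig (hankel s (\<lambda>j. - a j))"
proof -
  obtain P D where S1: "sdecomp (s+1) (hankel s a) P D" using hankel_decomp by blast
  interpret S1: sdecomp "s+1" "hankel s a" P D by fact
  have "hankel s (\<lambda>j. - a j) = - hankel s a" unfolding hankel_def by (rule eq_matI) auto
  hence S2: "sdecomp (s+1) (hankel s (\<lambda>j. - a j)) P (-D)" using sdecomp_neg[OF S1] by simp
  interpret S2: sdecomp "s+1" "hankel s (\<lambda>j. - a j)" P "-D" by fact
  have "S2.es = map uminus S1.es" unfolding S2.es_def S1.es_def diag_mat_def using S1.Dc by auto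
  hence "length (filter (\<lambda>e. e > 0) S2.es) = length (filter (\<lambda>e. e < 0) S1.es)"
    by (simp add: filter_map comp_def)
  thus ?thesis using S1.num_neg S2.num_pos by simp
qed

lemma F1_pos:
  assumes r: "is_repr s a R"
  shows "num_pos_eig (hankel s a) \<le> fst (badge R)"
proof -
  obtain P D where S1: "sdecomp (s+1) (hankel s a) P D" using hankel_decomp by blast
  interpret S1: sdecomp "s+1" "hankel s a" P D by fact
  have ac: "\<forall>j\<le>2*s. a j = coefs (2*s) R j" using r is_repr_iff by blast
  define W where "W = map (\<lambda>t. mvec s (fst (snd t)) (snd (snd t))) (filter (\<lambda>t. fst t > 0) R)"
  have "length (filter (\<lambda>e. e > 0) S1.es) \<le> length W"
  proof (rule S1.pos_le)
    show "set W \<subseteq> carrier_vec (s+1)" unfolding W_def by auto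
    fix x assume x: "x \<in> carrier_vec (s+1)" and orth: "\<forall>w\<in>set W. w \<bullet> x = 0"
    have "x \<bullet> (hankel s a *\<^sub>v x) = (\<Sum>t\<leftarrow>R. fst t * (mvec s (fst (snd t)) (snd (snd t)) \<bullet> x)^2)"
      by (rule hankel_qf[OF ac x])
    also have "\<dots> \<le> 0"
    proof (rule sum_list_nonpos)
      fix y assume "y \<in> set (map (\<lambda>t. fst t * (mvec s (fst (snd t)) (snd (snd t)) \<bullet> x)^2) R)"
      then obtain t where t: "t \<in> set R" "y = fst t * (mvec s (fst (snd t)) (snd (snd t)) \<bullet> x)^2" by auto
      show "y \<le> 0"
      proof (cases "fst t > 0")
        case True
        hence "mvec s (fst (snd t)) (snd (snd t)) \<in> set W" unfolding W_def using t by auto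
        thus ?thesis using orth t by auto
      next
        case False thus ?thesis using t by (simp add: mult_nonpos_nonneg)
      qed
    qed
    finally show "x \<bullet> (hankel s a *\<^sub>v x) \<le> 0" .
  qed
  thus ?thesis using S1.num_pos unfolding W_def badge_def by simp
qed

lemma coefs_neg: "coefs N (map (\<lambda>t. (- fst t, snd t)) R) j = - coefs N R j"
  by (induction R) auto

lemma F1_neg:
  assumes r: "is_repr s a R"
  shows "num_neg_eig (hankel s a) \<le> snd (badge R)"
proof -
  have "is_repr s (\<lambda>j. - a j) (map (\<lambda>t. (- fst t, snd t)) R)"
    using r unfolding is_repr_iff by (auto simp: coefs_neg)
  from F1_pos[OF this] have "num_pos_eig (hankel s (\<lambda>j. - a j)) \<le> fst (badge (map (\<lambda>t. (- fst t, snd t)) R))" .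
  thus ?thesis unfolding num_neg_hankel badge_def by (simp add: filter_map comp_def)
qed

lemma proportional_iff: "proportional (a, b) (c, d) \<longleftrightarrow> a * d = b * c"
proof
  assume "proportional (a, b) (c, d)"
  thus "a * d = b * c" unfolding proportional_def by auto
next
  assume h: "a * d = b * c"
  show "proportional (a, b) (c, d)"
  proof (cases "c = 0 \<and> d = 0")
    case True thus ?thesis unfolding proportional_def by auto
  next
    case False
    show ?thesis
    proof (cases "c = 0")
      case True
      with False have d: "d \<noteq> 0" by simp
      with h True have a0: "a = 0" by simp
      show ?thesis unfolding proportional_def
        by (rule disjI1, rule exI[of _ "b / d"]) (use True d a0 in simp)
    next
      case c: False
      have "b = (a / c) * d" using h c by (simp add: field_simps)
      show ?thesis unfolding proportional_def
        by (rule disjI1, rule exI[of _ "a / c"]) (use c \<open>b = (a / c) * d\<close> in simp)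
    qed
  qed
qed

lemma proportional_sym: "proportional l m = proportional m l"
  unfolding proportional_def by auto

lemma honest_map_snd: "map snd R = map snd R' \<Longrightarrow> honest R = honest R'"
  unfolding honest_def by (metis length_map nth_map)

lemma honest_Cons: "honest (t # R) \<longleftrightarrow> honest R \<and> (\<forall>u\<in>set R. \<not> proportional (snd t) (snd u))"
proof
  assume h: "honest (t # R)"
  have "honest R" unfolding honest_def
  proof (intro allI impI)
    fix i j assume "i < length R" "j < length R" "i \<noteq> j"
    thus "\<not> proportional (snd (R ! i)) (snd (R ! j))"
      using h[unfolded honest_def, rule_format, of "Suc i" "Suc j"] by simp
  qed
  moreover have "\<forall>u\<in>set R. \<not> proportional (snd t) (snd u)"
  proof
    fix u assume "u \<in> set R"
    then obtain j where "j < length R" "u = R ! j" by (auto simp: in_set_conv_nth)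
    thus "\<not> proportional (snd t) (snd u)"
      using h[unfolded honest_def, rule_format, of 0 "Suc j"] by simp
  qed
  ultimately show "honest R \<and> (\<forall>u\<in>set R. \<not> proportional (snd t) (snd u))" by blast
next
  assume h: "honest R \<and> (\<forall>u\<in>set R. \<not> proportional (snd t) (snd u))"
  show "honest (t # R)" unfolding honest_def
  proof (intro allI impI)
    fix i j assume ij: "i < length (t # R)" "j < length (t # R)" "i \<noteq> j"
    show "\<not> proportional (snd ((t # R) ! i)) (snd ((t # R) ! j))"
    proof (cases i)
      case 0
      then obtain j' where "j = Suc j'" using ij by (cases j) auto
      thus ?thesis using 0 h ij by auto
    next
      case (Suc i')
      show ?thesis
      proof (cases j)
        case 0 thus ?thesis using Suc h ij by (auto simp: proportional_sym)
      next
        case (Suc j') thus ?thesis using \<open>i = Suc i'\<close> h ij unfolding honest_def by auto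
      qed
    qed
  qed
qed

lemma coefs_update: "i < length R \<Longrightarrow> coefs N (R[i := x]) j =
  coefs N R j - fst (R ! i) * fst (snd (R ! i)) ^ (N - j) * snd (snd (R ! i)) ^ j
  + fst x * fst (snd x) ^ (N - j) * snd (snd x) ^ j"
proof (induction R arbitrary: i)
  case Nil thus ?case by simp
next
  case (Cons t R)
  thus ?case by (cases i) auto
qed

definition good_rep :: "(real \<times> real \<times> real) list \<Rightarrow> bool" where
  "good_rep R \<longleftrightarrow> honest R \<and> (\<forall>t\<in>set R. fst t > 0 \<and> (fst (snd t) \<noteq> 0 \<or> snd (snd t) \<noteq> 0))"

lemma merge:
  assumes "\<forall>t\<in>set T. fst t \<ge> 0" and s: "s \<ge> 1"
  shows "\<exists>R. good_rep R \<and> length R \<le> length T \<and> (\<forall>j\<le>2*s. coefs (2*s) R j = coefs (2*s) T j)"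
  using assms(1)
proof (induction T)
  case Nil
  have "good_rep []" unfolding good_rep_def honest_def by simp
  thus ?case by auto
next
  case (Cons t T)
  from Cons obtain R where R: "good_rep R" "length R \<le> length T"
    "\<forall>j\<le>2*s. coefs (2*s) R j = coefs (2*s) T j" by auto
  obtain w xi eta where t: "t = (w, xi, eta)" by (cases t) auto
  have w: "w \<ge> 0" using Cons.prems t by auto
  show ?case
  proof (cases "w = 0 \<or> (xi = 0 \<and> eta = 0)")
    case True
    have "coefs (2*s) (t # T) j = coefs (2*s) T j" if "j \<le> 2*s" for j
    proof -
      have "w * xi ^ (2*s - j) * eta ^ j = 0"
      proof (cases "w = 0")
        case False
        with True have "xi = 0" "eta = 0" by auto
        thus ?thesis using s by (cases j) auto
      qed simp
      thus ?thesis using t by simp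
    qed
    thus ?thesis using R by auto
  next
    case False
    hence wpos: "w > 0" and nz: "xi \<noteq> 0 \<or> eta \<noteq> 0" using w by auto
    show ?thesis
    proof (cases "\<exists>i<length R. proportional (xi, eta) (snd (R ! i))")
      case True
      then obtain i where i: "i < length R" and pr: "proportional (xi, eta) (snd (R ! i))" by blast
      obtain l al be where Ri: "R ! i = (l, al, be)" by (cases "R ! i") auto
      have Rin: "R ! i \<in> set R" using i by simp
      have lpos: "l > 0" and nz2: "al \<noteq> 0 \<or> be \<noteq> 0" using R(1) Rin Ri unfolding good_rep_def by auto
      from pr Ri have det: "xi * be = eta * al" by (simp add: proportional_iff)
      obtain c where c: "xi = c * al" "eta = c * be"
      proof (cases "al = 0")
        case True
        with nz2 have "be \<noteq> 0" by simp
        with det True have "xi = 0" by simp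
        thus ?thesis using that[of "eta / be"] True \<open>be \<noteq> 0\<close> by simp
      next
        case False
        have "eta = (xi / al) * be" using det False by (simp add: field_simps)
        thus ?thesis using that[of "xi / al"] False by simp
      qed
      define R' where "R' = R[i := (l + w * c ^ (2*s), al, be)]"
      have "map snd R' = map snd R" unfolding R'_def map_update using i Ri by (metis list_update_id nth_map snd_conv)
      hence hon: "honest R'" using R(1) honest_map_snd unfolding good_rep_def by blast
      have pos': "l + w * c ^ (2*s) > 0" using lpos wpos by (simp add: add_pos_nonneg zero_le_even_power)
      have good: "good_rep R'" unfolding good_rep_def
      proof
        show "honest R'" by (rule hon)
        show "\<forall>u\<in>set R'. fst u > 0 \<and> (fst (snd u) \<noteq> 0 \<or> snd (snd u) \<noteq> 0)"
        proof
          fix u assume "u \<in> set R'"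
          hence "u \<in> set R \<or> u = (l + w * c ^ (2*s), al, be)" using set_update_subset_insert[of R i "(l + w * c ^ (2*s), al, be)"] unfolding R'_def by blast
          thus "fst u > 0 \<and> (fst (snd u) \<noteq> 0 \<or> snd (snd u) \<noteq> 0)" using R(1) pos' nz2 unfolding good_rep_def by auto
        qed
      qed
      have "coefs (2*s) R' j = coefs (2*s) (t # T) j" if "j \<le> 2*s" for j
      proof -
        have "coefs (2*s) R' j = coefs (2*s) R j + w * c ^ (2*s) * al ^ (2*s - j) * be ^ j"
          unfolding R'_def coefs_update[OF i] Ri by (simp add: algebra_simps)
        also have "w * c ^ (2*s) * al ^ (2*s - j) * be ^ j = w * xi ^ (2*s - j) * eta ^ j"
        proof -
          have "c ^ (2*s) = c ^ (2*s - j) * c ^ j" using that by (simp add: power_add[symmetric])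
          thus ?thesis unfolding c power_mult_distrib by (simp only: mult_ac)
        qed
        finally show ?thesis using R(3) that t by simp
      qed
      moreover have "length R' \<le> length (t # T)" unfolding R'_def using R(2) by simp
      ultimately show ?thesis using good by blast
    next
      case False
      define R' where "R' = t # R"
      have "honest R'" unfolding R'_def honest_Cons
      proof
        show "honest R" using R(1) unfolding good_rep_def by simp
        show "\<forall>u\<in>set R. \<not> proportional (snd t) (snd u)"
          using False t by (metis in_set_conv_nth snd_conv)
      qed
      hence "good_rep R'" unfolding good_rep_def R'_def using R(1) wpos nz t unfolding good_rep_def by auto
      moreover have "length R' \<le> length (t # T)" unfolding R'_def using R(2) by simp
      moreover have "\<forall>j\<le>2*s. coefs (2*s) R' j = coefs (2*s) (t # T) j" unfolding R'_def using R(3) by simp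
      ultimately show ?thesis by blast
    qed
  qed
qed

lemma pos_lower:
  assumes r: "is_repr s a R" and pos: "\<forall>t\<in>set R. fst t > 0"
    and m: "m \<le> length R" "m \<le> s + 1"
    and np: "\<forall>j<m. \<forall>k<m. j \<noteq> k \<longrightarrow> \<not> proportional (snd (R ! j)) (snd (R ! k))"
    and nz: "\<forall>k<m. fst (snd (R ! k)) \<noteq> 0 \<or> snd (snd (R ! k)) \<noteq> 0"
  shows "m \<le> num_pos_eig (hankel s a)"
proof -
  obtain P D where S1: "sdecomp (s+1) (hankel s a) P D" using hankel_decomp by blast
  interpret S1: sdecomp "s+1" "hankel s a" P D by fact
  have ac: "\<forall>j\<le>2*s. a j = coefs (2*s) R j" using r is_repr_iff by blast
  define al where "al k = fst (snd (R ! k))" for k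
  define be where "be k = snd (snd (R ! k))" for k
  define U where "U = map (\<lambda>k. mvec s (al k) (be k)) [0..<m]"
  have lenU: "length U = m" unfolding U_def by simp
  have "length U \<le> length (filter (\<lambda>e. e > 0) S1.es)"
  proof (rule S1.pos_ge)
    show "set U \<subseteq> carrier_vec (s+1)" unfolding U_def by auto
    fix c assume c: "(c :: real vec) \<in> carrier_vec (length U)" "c \<noteq> 0\<^sub>v (length U)"
    define M where "M = mat_of_cols (s+1) U"
    define x where "x = M *\<^sub>v c"
    have x: "x \<in> carrier_vec (s+1)" unfolding x_def M_def
      by (rule mult_mat_vec_carrier[OF mat_of_cols_carrier(1)]) (use c lenU in simp)
    have xi: "x $ i = (\<Sum>k<m. c $ k * (al k ^ (s - i) * be k ^ i))" if "i < s+1" for i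
      unfolding x_def M_def using that c lenU
      by (simp add: mat_of_cols_def scalar_prod_def U_def mvec_def atLeast0LessThan mult.commute del: sum.lessThan_Suc)
    show "(M *\<^sub>v c) \<bullet> (hankel s a *\<^sub>v (M *\<^sub>v c)) > 0" unfolding x_def[symmetric]
    proof (rule ccontr)
      assume "\<not> x \<bullet> (hankel s a *\<^sub>v x) > 0"
      hence le: "(\<Sum>t\<leftarrow>R. fst t * (mvec s (fst (snd t)) (snd (snd t)) \<bullet> x)^2) \<le> 0"
        using hankel_qf[OF ac x] by simp
      have nn: "\<And>y. y \<in> set (map (\<lambda>t. fst t * (mvec s (fst (snd t)) (snd (snd t)) \<bullet> x)^2) R) \<Longrightarrow> 0 \<le> y"
        using pos by auto
      hence "(\<Sum>t\<leftarrow>R. fst t * (mvec s (fst (snd t)) (snd (snd t)) \<bullet> x)^2) = 0"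
        using le sum_list_nonneg[of "map (\<lambda>t. fst t * (mvec s (fst (snd t)) (snd (snd t)) \<bullet> x)^2) R", OF nn] by linarith
      hence "\<forall>y\<in>set (map (\<lambda>t. fst t * (mvec s (fst (snd t)) (snd (snd t)) \<bullet> x)^2) R). y = 0"
        using sum_list_nonneg_eq_0_iff[of "map (\<lambda>t. fst t * (mvec s (fst (snd t)) (snd (snd t)) \<bullet> x)^2) R", OF nn] by simp
      hence mz: "mvec s (al k) (be k) \<bullet> x = 0" if "k < m" for k
      proof -
        have "R ! k \<in> set R" using that m by simp
        hence "fst (R ! k) * (mvec s (al k) (be k) \<bullet> x)^2 = 0"
          using \<open>\<forall>y\<in>_. y = 0\<close> unfolding al_def be_def by auto
        moreover have "fst (R ! k) > 0" using pos \<open>R ! k \<in> set R\<close> by auto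
        ultimately show ?thesis by simp
      qed
      have "x \<bullet> x = (\<Sum>i<s+1. x $ i * x $ i)" using x by (simp add: scalar_prod_def atLeast0LessThan del: sum.lessThan_Suc)
      also have "\<dots> = (\<Sum>i<s+1. \<Sum>k<m. c $ k * (al k ^ (s - i) * be k ^ i * x $ i))"
        by (intro sum.cong refl) (simp add: xi sum_distrib_right mult_ac del: sum.lessThan_Suc)
      also have "\<dots> = (\<Sum>k<m. \<Sum>i<s+1. c $ k * (al k ^ (s - i) * be k ^ i * x $ i))"
        by (rule sum.swap)
      also have "\<dots> = (\<Sum>k<m. c $ k * (mvec s (al k) (be k) \<bullet> x))"
      proof (intro sum.cong refl)
        fix k
        have dx: "dim_vec x = s + 1" using x by simp
        have "mvec s (al k) (be k) \<bullet> x = (\<Sum>i\<in>{0..<s+1}. vec (s+1) (\<lambda>i. al k ^ (s - i) * be k ^ i) $ i * x $ i)"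
          unfolding mvec_def scalar_prod_def dx ..
        also have "\<dots> = (\<Sum>i<s+1. al k ^ (s - i) * be k ^ i * x $ i)"
          unfolding atLeast0LessThan by (intro sum.cong refl) simp
        finally show "(\<Sum>i<s+1. c $ k * (al k ^ (s - i) * be k ^ i * x $ i)) = c $ k * (mvec s (al k) (be k) \<bullet> x)"
          by (simp add: sum_distrib_left del: sum.lessThan_Suc)
      qed
      also have "\<dots> = 0" using mz by simp
      finally have "x \<bullet> x = 0" .
      hence x0: "x = 0\<^sub>v (s+1)" using conjugate_square_eq_0_vec[OF x] by (simp add: sprodc_real)
      have "\<forall>k<m. c $ k = 0"
      proof (rule vandermonde[of m s al be "\<lambda>k. c $ k"])
        show "m \<le> s + 1" by fact
        show "\<forall>j<m. \<forall>k<m. j \<noteq> k \<longrightarrow> al j * be k \<noteq> be j * al k"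
        proof (intro allI impI)
          fix j k assume "j < m" "k < m" "j \<noteq> k"
          hence "\<not> proportional (al j, be j) (al k, be k)" using np unfolding al_def be_def by auto
          thus "al j * be k \<noteq> be j * al k" by (simp add: proportional_iff)
        qed
        show "\<forall>k<m. al k \<noteq> 0 \<or> be k \<noteq> 0" using nz unfolding al_def be_def by auto
        show "\<forall>i\<le>s. (\<Sum>k<m. c $ k * (al k ^ (s - i) * be k ^ i)) = 0"
          using xi x0 by (metis Suc_eq_plus1 index_zero_vec(1) le_imp_less_Suc)
      qed
      hence "c = 0\<^sub>v (length U)" using c(1) lenU by (intro eq_vecI) auto
      thus False using c(2) by simp
    qed
  qed
  thus ?thesis using S1.num_pos lenU by simp
qed

lemma short_rep:
  assumes r: "is_repr s a R" and g: "good_rep R" and len: "length R \<le> s + 1"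
  shows "num_pos_eig (hankel s a) = length R"
proof -
  have pos: "\<forall>t\<in>set R. fst t > 0" using g unfolding good_rep_def by auto
  have "num_pos_eig (hankel s a) \<le> fst (badge R)" by (rule F1_pos[OF r])
  also have "fst (badge R) = length R" unfolding badge_def using pos by (simp add: filter_id_conv)
  finally have le: "num_pos_eig (hankel s a) \<le> length R" .
  have "length R \<le> num_pos_eig (hankel s a)"
  proof (rule pos_lower[OF r pos order.refl len])
    show "\<forall>j<length R. \<forall>k<length R. j \<noteq> k \<longrightarrow> \<not> proportional (snd (R ! j)) (snd (R ! k))"
      using g unfolding good_rep_def honest_def by auto
    show "\<forall>k<length R. fst (snd (R ! k)) \<noteq> 0 \<or> snd (snd (R ! k)) \<noteq> 0"
      using g unfolding good_rep_def by auto
  qed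
  with le show ?thesis by simp
qed

lemma diag_mult_mat:
  "mat n n (\<lambda>(i,j). if i = j then f i else (0::real)) * mat n n (\<lambda>(i,j). if i = j then g i else 0) =
   mat n n (\<lambda>(i,j). if i = j then f i * g i else 0)"
proof (rule eq_matI)
  fix i j assume ij: "i < dim_row (mat n n (\<lambda>(i,j). if i = j then f i * g i else (0::real)))"
    "j < dim_col (mat n n (\<lambda>(i,j). if i = j then f i * g i else (0::real)))"
  hence i: "i < n" and j: "j < n" by auto
  have "(mat n n (\<lambda>(i,j). if i = j then f i else (0::real)) * mat n n (\<lambda>(i,j). if i = j then g i else 0)) $$ (i,j)
    = (\<Sum>k\<in>{0..<n}. (if i = k then f i else 0) * (if k = j then g k else 0))"
    using i j by (simp add: scalar_prod_def)
  also have "\<dots> = (\<Sum>k\<in>{0..<n}. if k = i then (if i = j then f i * g i else 0) else 0)"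
    by (intro sum.cong refl) auto
  also have "\<dots> = (if i = j then f i * g i else 0)" using i by simp
  finally show "(mat n n (\<lambda>(i,j). if i = j then f i else (0::real)) * mat n n (\<lambda>(i,j). if i = j then g i else 0)) $$ (i,j)
    = mat n n (\<lambda>(i,j). if i = j then f i * g i else 0) $$ (i,j)" using i j by simp
qed auto

lemma cancel_l: "A \<in> carrier_mat n n \<Longrightarrow> B \<in> carrier_mat n n \<Longrightarrow> A * B = 1\<^sub>m n \<Longrightarrow> Z \<in> carrier_mat n nc
  \<Longrightarrow> A * (B * Z) = (Z :: real mat)"
  by (metis assoc_mult_mat left_mult_one_mat)

lemma pencil:
  fixes s :: nat and a :: "nat \<Rightarrow> real"
  assumes npos: "num_pos_eig (hankel s a) = s + 1"
  shows "\<exists>T. (\<forall>t\<in>set T. fst t \<ge> 0) \<and> length T = s + 1 \<and> (\<forall>j\<le>2*s. a j = coefs (2*s) T j)"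
proof -
  define n where "n = s + 1"
  define H where "H = hankel s a"
  have Hc: "H \<in> carrier_mat n n" unfolding H_def n_def by (rule hankel_c)
  have HT: "H\<^sup>T = H" unfolding H_def by (rule hankel_sym)
  obtain P D where S1: "sdecomp n H P D" using hankel_decomp unfolding H_def n_def by blast
  interpret S1: sdecomp n H P D by fact
  have Pc: "P \<in> carrier_mat n n" by (rule S1.Pc)
  have PTc: "P\<^sup>T \<in> carrier_mat n n" using Pc by simp
  have Dc: "D \<in> carrier_mat n n" by (rule S1.Dc)
  have esi: "S1.es ! i > 0" if "i < n" for i
  proof (rule ccontr)
    assume "\<not> S1.es ! i > 0"
    hence "length (filter (\<lambda>e. e > 0) S1.es) < length S1.es"
      by (intro length_filter_less[of "S1.es ! i"]) (use that S1.len_es in auto)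
    thus False using npos S1.num_pos S1.len_es unfolding H_def n_def by simp
  qed
  define ds where "ds i = S1.es ! i" for i
  have D_ds: "D = mat n n (\<lambda>(i,j). if i = j then ds i else 0)" unfolding ds_def by (rule S1.D_eq)
  have dsi: "ds i > 0" if "i < n" for i unfolding ds_def using esi[OF that] .
  define Dhi where "Dhi = mat n n (\<lambda>(i,j). if i = j then 1 / sqrt (ds i) else (0::real))"
  have Dhic: "Dhi \<in> carrier_mat n n" unfolding Dhi_def by simp
  have DhiT: "Dhi\<^sup>T = Dhi" unfolding Dhi_def by (rule eq_matI) auto
  have DDD: "Dhi * (D * (Dhi * Z)) = Z" if "Z \<in> carrier_mat n nc" for Z nc
  proof -
    have "Dhi * D * Dhi = mat n n (\<lambda>(i,j). if i = j then 1 / sqrt (ds i) * ds i * (1 / sqrt (ds i)) else 0)"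
      unfolding Dhi_def D_ds by (simp only: diag_mult_mat)
    also have "\<dots> = 1\<^sub>m n"
    proof (rule eq_matI)
      fix i j assume "i < dim_row (1\<^sub>m n)" "j < dim_col (1\<^sub>m n)"
      hence ij: "i < n" "j < n" by auto
      have "1 / sqrt (ds i) * ds i * (1 / sqrt (ds i)) = 1"
        using dsi[OF ij(1)] by (simp add: field_simps)
      thus "mat n n (\<lambda>(i,j). if i = j then 1 / sqrt (ds i) * ds i * (1 / sqrt (ds i)) else 0) $$ (i,j) = 1\<^sub>m n $$ (i,j)"
        using ij by (cases "i = j") auto
    qed auto
    finally have "Dhi * D * Dhi = 1\<^sub>m n" .
    moreover have "Dhi * (D * (Dhi * Z)) = (Dhi * D * Dhi) * Z" using that Dhic Dc
      by (simp add: assoc_mult_mat[of _ n n _ n _ nc] assoc_mult_mat[of _ n n _ n _ n])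
    ultimately show ?thesis using that by simp
  qed
  define H' where "H' = mat n n (\<lambda>(i,j). if i + j < 2*s then a (i+j+1) else 0)"
  have H'c: "H' \<in> carrier_mat n n" unfolding H'_def by simp
  have H'T: "H'\<^sup>T = H'" unfolding H'_def by (rule eq_matI) (auto simp: add.commute)
  define S where "S = Dhi * (P\<^sup>T * (H' * (P * Dhi)))"
  have Sc: "S \<in> carrier_mat n n" unfolding S_def using Dhic Pc H'c by simp
  have ST: "S\<^sup>T = S"
  proof -
    have "S\<^sup>T = (P\<^sup>T * (H' * (P * Dhi)))\<^sup>T * Dhi\<^sup>T" unfolding S_def
      by (rule transpose_mult[of _ n n _ n]) (use Dhic Pc H'c in auto)
    also have "(P\<^sup>T * (H' * (P * Dhi)))\<^sup>T = (H' * (P * Dhi))\<^sup>T * P\<^sup>T\<^sup>T"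
      by (rule transpose_mult[of _ n n _ n]) (use Dhic Pc H'c in auto)
    also have "(H' * (P * Dhi))\<^sup>T = (P * Dhi)\<^sup>T * H'\<^sup>T"
      by (rule transpose_mult[of _ n n _ n]) (use Dhic Pc H'c in auto)
    also have "(P * Dhi)\<^sup>T = Dhi\<^sup>T * P\<^sup>T"
      by (rule transpose_mult[of _ n n _ n]) (use Dhic Pc H'c in auto)
    finally show ?thesis unfolding DhiT H'T S_def transpose_transpose using Dhic Pc H'c
      by (simp add: assoc_mult_mat[of _ n n _ n _ n])
  qed
  obtain Q E where Q: "orth_mat n Q" and Ec: "E \<in> carrier_mat n n" and Ediag: "diagonal_mat E"
    and SQ: "S = Q * E * Q\<^sup>T" using spectral[OF Sc ST] by blast
  have Qc: "Q \<in> carrier_mat n n" and QQ: "Q\<^sup>T * Q = 1\<^sub>m n" using Q unfolding orth_mat_def by auto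
  define X where "X = P * (Dhi * Q)"
  have Xc: "X \<in> carrier_mat n n" unfolding X_def using Pc Dhic Qc by simp
  have XT: "X\<^sup>T = Q\<^sup>T * (Dhi * P\<^sup>T)"
  proof -
    have "X\<^sup>T = (Dhi * Q)\<^sup>T * P\<^sup>T" unfolding X_def
      by (rule transpose_mult[of _ n n _ n]) (use Dhic Pc Qc in auto)
    also have "(Dhi * Q)\<^sup>T = Q\<^sup>T * Dhi"
      using transpose_mult[OF Dhic Qc] DhiT by simp
    finally show ?thesis using Qc Dhic Pc by (simp add: assoc_mult_mat[of _ n n _ n _ n])
  qed
  have XTc: "X\<^sup>T \<in> carrier_mat n n" using Xc by simp
  have XHX: "X\<^sup>T * (H * X) = 1\<^sub>m n"
  proof -
    have "X\<^sup>T * (H * X) = Q\<^sup>T * (Dhi * (P\<^sup>T * (P * (D * (P\<^sup>T * (P * (Dhi * Q)))))))"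
      unfolding XT unfolding X_def S1.Aeq using Qc Dhic Pc Dc by (simp add: assoc_mult_mat[of _ n n _ n _ n])
    also have "\<dots> = Q\<^sup>T * (Dhi * (D * (Dhi * Q)))"
    proof -
      have PPZ: "\<And>Z. Z \<in> carrier_mat n n \<Longrightarrow> P\<^sup>T * (P * Z) = Z" using cancel_l[OF PTc Pc S1.PP] by blast
      show ?thesis using Qc Dhic Pc Dc by (simp add: PPZ)
    qed
    also have "\<dots> = Q\<^sup>T * Q" using DDD[OF Qc] by simp
    finally show ?thesis using QQ by simp
  qed
  have XH'X: "X\<^sup>T * (H' * X) = E"
  proof -
    have "X\<^sup>T * (H' * X) = Q\<^sup>T * (S * Q)"
      unfolding XT unfolding X_def S_def using Qc Dhic Pc H'c by (simp add: assoc_mult_mat[of _ n n _ n _ n])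
    also have "\<dots> = Q\<^sup>T * (Q * (E * (Q\<^sup>T * Q)))" unfolding SQ using Qc Ec by (simp add: assoc_mult_mat[of _ n n _ n _ n])
    also have "\<dots> = E"
    proof -
      have QQZ: "\<And>Z. Z \<in> carrier_mat n n \<Longrightarrow> Q\<^sup>T * (Q * Z) = Z" using cancel_l[OF _ Qc QQ] Qc by auto
      show ?thesis unfolding QQ using Qc Ec by (simp add: QQZ)
    qed
    finally show ?thesis .
  qed
  have XHc: "X\<^sup>T * H \<in> carrier_mat n n" using XTc Hc by simp
  have "(X\<^sup>T * H) * X = 1\<^sub>m n" using XHX XTc Hc Xc by (simp add: assoc_mult_mat[of _ n n _ n _ n])
  hence XXH: "X * (X\<^sup>T * H) = 1\<^sub>m n" using mat_mult_left_right_inverse[OF XHc Xc] by simp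
  have HXX: "H * (X * X\<^sup>T) = 1\<^sub>m n"
  proof -
    have "(X * (X\<^sup>T * H))\<^sup>T = (X\<^sup>T * H)\<^sup>T * X\<^sup>T"
      by (rule transpose_mult[of _ n n _ n]) (use Xc XHc in auto)
    also have "(X\<^sup>T * H)\<^sup>T = H\<^sup>T * X\<^sup>T\<^sup>T"
      by (rule transpose_mult[of _ n n _ n]) (use XTc Hc in auto)
    finally have "(X * (X\<^sup>T * H))\<^sup>T = H * X * X\<^sup>T" unfolding HT by simp
    thus ?thesis unfolding XXH using Hc Xc by (simp add: assoc_mult_mat[of _ n n _ n _ n])
  qed
  define Y where "Y = H * X"
  have Yc: "Y \<in> carrier_mat n n" unfolding Y_def using Hc Xc by simp
  have YE: "H' * X = Y * E"
  proof -
    have "H' * X = (H * (X * X\<^sup>T)) * (H' * X)" unfolding HXX using H'c Xc by simp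
    also have "\<dots> = H * (X * (X\<^sup>T * (H' * X)))" using Hc Xc H'c by (simp add: assoc_mult_mat[of _ n n _ n _ n])
    also have "\<dots> = Y * E" unfolding XH'X Y_def using Hc Xc Ec by (simp add: assoc_mult_mat[of _ n n _ n _ n])
    finally show ?thesis .
  qed
  have YY: "Y * Y\<^sup>T = H"
  proof -
    have "Y\<^sup>T = X\<^sup>T * H" unfolding Y_def using transpose_mult[OF Hc Xc] HT by simp
    hence "Y * Y\<^sup>T = (H * (X * X\<^sup>T)) * H" unfolding Y_def using Hc Xc by (simp add: assoc_mult_mat[of _ n n _ n _ n])
    thus ?thesis unfolding HXX using Hc by simp
  qed
  define e where "e i = E $$ (i,i)" for i
  have Yrec: "Y $$ (Suc r, i) = e i * Y $$ (r, i)" if "r < s" "i < n" for r i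
  proof -
    have "(H' * X) $$ (r, i) = (\<Sum>c\<in>{0..<n}. H' $$ (r,c) * X $$ (c,i))"
      using that H'c Xc unfolding n_def by (simp add: scalar_prod_def)
    also have "\<dots> = (\<Sum>c\<in>{0..<n}. H $$ (Suc r, c) * X $$ (c,i))"
      by (intro sum.cong refl) (use that in \<open>auto simp: H'_def H_def hankel_def n_def\<close>)
    also have "\<dots> = Y $$ (Suc r, i)" using that Hc Xc unfolding Y_def n_def by (simp add: scalar_prod_def)
    finally have l: "(H' * X) $$ (r, i) = Y $$ (Suc r, i)" .
    have "(Y * E) $$ (r, i) = (\<Sum>k\<in>{0..<n}. Y $$ (r,k) * E $$ (k,i))"
      using that Yc Ec unfolding n_def by (simp add: scalar_prod_def)
    also have "\<dots> = (\<Sum>k\<in>{i}. Y $$ (r,k) * E $$ (k,i))"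
      by (rule sum.mono_neutral_right) (use that Ediag Ec in \<open>auto simp: diagonal_mat_def\<close>)
    finally have "(Y * E) $$ (r, i) = e i * Y $$ (r, i)" unfolding e_def by simp
    with l YE show ?thesis by simp
  qed
  have Ypow: "Y $$ (r, i) = e i ^ r * Y $$ (0, i)" if "r \<le> s" "i < n" for r i
    using that
  proof (induction r)
    case (Suc r) thus ?case using Yrec[of r i] by simp
  qed simp
  have ajk: "a (j + k) = (\<Sum>i<n. (Y $$ (0,i))^2 * e i ^ (j + k))" if "j \<le> s" "k \<le> s" for j k
  proof -
    have "a (j + k) = H $$ (j, k)" using that unfolding H_def hankel_def by simp
    also have "\<dots> = (Y * Y\<^sup>T) $$ (j, k)" unfolding YY ..
    also have "\<dots> = (\<Sum>i\<in>{0..<n}. Y $$ (j,i) * Y $$ (k,i))"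
      using that Yc unfolding n_def by (simp add: scalar_prod_def)
    also have "\<dots> = (\<Sum>i<n. (Y $$ (0,i))^2 * e i ^ (j + k))"
      unfolding atLeast0LessThan
    proof (intro sum.cong refl)
      fix i assume i: "i \<in> {..<n}"
      have yj: "Y $$ (j,i) = e i ^ j * Y $$ (0,i)" using Ypow[of j i] that i by simp
      have yk: "Y $$ (k,i) = e i ^ k * Y $$ (0,i)" using Ypow[of k i] that i by simp
      show "Y $$ (j,i) * Y $$ (k,i) = (Y $$ (0,i))^2 * e i ^ (j + k)"
        unfolding yj yk power_add power2_eq_square by (simp only: mult_ac)
    qed
    finally show ?thesis .
  qed
  define T where "T = map (\<lambda>i. ((Y $$ (0,i))^2, 1::real, e i)) [0..<n]"
  have "\<forall>l\<le>2*s. a l = coefs (2*s) T l"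
  proof (intro allI impI)
    fix l assume l: "l \<le> 2*s"
    define j where "j = min l s"
    have jk: "j \<le> s" "l - j \<le> s" "j + (l - j) = l" using l unfolding j_def by auto
    have "a l = (\<Sum>i<n. (Y $$ (0,i))^2 * e i ^ l)" using ajk[OF jk(1,2)] jk(3) by simp
    also have "\<dots> = coefs (2*s) T l"
      unfolding T_def coefs_def by (simp add: interv_sum_list_conv_sum_set_nat atLeast0LessThan comp_def)
    finally show "a l = coefs (2*s) T l" .
  qed
  moreover have "\<forall>t\<in>set T. fst t \<ge> 0" unfolding T_def by auto
  moreover have "length T = s + 1" unfolding T_def n_def by simp
  ultimately show ?thesis by blast
qed

lemma num_pos_le: "num_pos_eig (hankel s a) \<le> s + 1"
proof -
  obtain P D where S1: "sdecomp (s+1) (hankel s a) P D" using hankel_decomp by blast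
  interpret S1: sdecomp "s+1" "hankel s a" P D by fact
  show ?thesis using S1.num_pos S1.len_es length_filter_le[of "\<lambda>e. e > 0" S1.es] by simp
qed

lemma rank_Q:
  assumes "num_neg_eig (hankel s a) = 0"
  shows "rank_H s a = num_pos_eig (hankel s a)"
proof -
  obtain P D where S1: "sdecomp (s+1) (hankel s a) P D" using hankel_decomp by blast
  interpret S1: sdecomp "s+1" "hankel s a" P D by fact
  have "filter (\<lambda>e. e < 0) S1.es = []" using assms S1.num_neg by simp
  hence "\<forall>e\<in>set S1.es. e \<ge> 0" by (auto simp: filter_empty_conv)
  from S1.rank_psd[OF this] show ?thesis unfolding rank_H_def S1.num_pos .
qed

lemma badge_good: "good_rep R \<Longrightarrow> badge R = (length R, 0)"
  unfolding good_rep_def badge_def by (auto simp: filter_id_conv filter_empty_conv)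

lemma Q_main:
  assumes s: "s \<ge> 1" and Q: "in_Q s a"
  shows "\<exists>R. is_repr s a R \<and> good_rep R \<and> length R = num_pos_eig (hankel s a)"
    and "num_neg_eig (hankel s a) = 0"
proof -
  obtain L where T0: "is_repr s a (map (\<lambda>l. (1, l)) L)" using in_Q_repr[OF Q] by blast
  have "num_neg_eig (hankel s a) \<le> snd (badge (map (\<lambda>l. (1::real, l)) L))" by (rule F1_neg[OF T0])
  also have "snd (badge (map (\<lambda>l. (1::real, l)) L)) = 0" unfolding badge_def by (simp add: filter_empty_conv)
  finally show "num_neg_eig (hankel s a) = 0" by simp
  have mkrep: "\<exists>R. is_repr s a R \<and> good_rep R \<and> length R \<le> length T"
    if T: "\<forall>t\<in>set T. fst t \<ge> 0" "\<forall>j\<le>2*s. a j = coefs (2*s) T j" for T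
  proof -
    obtain R where R: "good_rep R" "length R \<le> length T" "\<forall>j\<le>2*s. coefs (2*s) R j = coefs (2*s) T j"
      using merge[OF T(1) s] by blast
    have "is_repr s a R" unfolding is_repr_iff using R(1,3) T(2) unfolding good_rep_def by auto
    thus ?thesis using R by blast
  qed
  obtain R where R: "is_repr s a R" "good_rep R"
    using mkrep[of "map (\<lambda>l. (1, l)) L"] T0 unfolding is_repr_iff by auto
  obtain R2 where R2: "is_repr s a R2" "good_rep R2" "length R2 \<le> s + 1"
  proof (cases "length R \<le> s + 1")
    case True thus ?thesis using that R by blast
  next
    case False
    have "s + 1 \<le> num_pos_eig (hankel s a)"
    proof (rule pos_lower[OF R(1)])
      show "\<forall>t\<in>set R. fst t > 0" using R(2) unfolding good_rep_def by auto
      show "s + 1 \<le> length R" using False by simp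
      show "\<forall>j<s+1. \<forall>k<s+1. j \<noteq> k \<longrightarrow> \<not> proportional (snd (R ! j)) (snd (R ! k))"
        using R(2) False unfolding good_rep_def honest_def by auto
      show "\<forall>k<s+1. fst (snd (R ! k)) \<noteq> 0 \<or> snd (snd (R ! k)) \<noteq> 0"
        using R(2) False unfolding good_rep_def by (auto intro!: nth_mem)
    qed simp
    hence "num_pos_eig (hankel s a) = s + 1" using num_pos_le[of s a] by simp
    from pencil[OF this] obtain T where T: "\<forall>t\<in>set T. fst t \<ge> 0" "length T = s + 1"
      "\<forall>j\<le>2*s. a j = coefs (2*s) T j" by blast
    from mkrep[OF T(1) T(3)] T(2) show ?thesis using that by auto
  qed
  have "num_pos_eig (hankel s a) = length R2" by (rule short_rep[OF R2])
  thus "\<exists>R. is_repr s a R \<and> good_rep R \<and> length R = num_pos_eig (hankel s a)" using R2 by auto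
qed

lemma sig_unique:
  assumes w: "w \<in> badges s a" and min: "\<forall>v\<in>badges s a. badge_le w v"
  shows "signatures s a = {w}"
proof
  show "signatures s a \<subseteq> {w}"
  proof
    fix u assume "u \<in> signatures s a"
    hence "u \<in> badges s a" "\<forall>v\<in>badges s a. badge_le v u \<longrightarrow> v = u" unfolding signatures_def by auto
    thus "u \<in> {w}" using w min by auto
  qed
  show "{w} \<subseteq> signatures s a"
  proof -
    have "\<forall>v\<in>badges s a. badge_le v w \<longrightarrow> v = w"
    proof (intro ballI impI)
      fix v assume "v \<in> badges s a" "badge_le v w"
      with min have "badge_le w v" by auto
      with \<open>badge_le v w\<close> show "v = w" unfolding badge_le_def by (simp add: prod_eq_iff)
    qed
    thus ?thesis using w unfolding signatures_def by auto
  qed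
qed

theorem corollary2p10:
  fixes s :: nat and a :: "nat \<Rightarrow> real" and pH nH :: nat
  assumes "s \<ge> 1"
    and "sig_H s a = (pH, nH)"
  shows "(\<forall>u \<in> badges s a. pH \<le> fst u \<and> nH \<le> snd u)
    \<and> (in_Q s a \<longrightarrow> signatures s a = {sig_H s a} \<and> sig_H s a = (rank_H s a, 0))
    \<and> ((\<exists>u \<in> badges s a. fst u + snd u = pH + nH \<and> pH + nH = rank_H s a)
           \<longrightarrow> signatures s a = {sig_H s a})"
proof -
  have pn: "pH = num_pos_eig (hankel s a)" "nH = num_neg_eig (hankel s a)"
    using assms(2) unfolding sig_H_def by auto
  have part1: "\<forall>u \<in> badges s a. pH \<le> fst u \<and> nH \<le> snd u"
  proof
    fix u assume "u \<in> badges s a"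
    then obtain R where "u = badge R" "is_repr s a R" unfolding badges_def by auto
    thus "pH \<le> fst u \<and> nH \<le> snd u" using F1_pos F1_neg pn by auto
  qed
  have part2: "signatures s a = {sig_H s a} \<and> sig_H s a = (rank_H s a, 0)" if Q: "in_Q s a"
  proof -
    obtain R where R: "is_repr s a R" "good_rep R" "length R = num_pos_eig (hankel s a)"
      using Q_main(1)[OF assms(1) Q] by blast
    have nn: "num_neg_eig (hankel s a) = 0" using Q_main(2)[OF assms(1) Q] .
    have sig: "sig_H s a = (pH, 0)" using assms(2) nn pn by simp
    have "badge R = (pH, 0)" using badge_good[OF R(2)] R(3) pn by simp
    hence w: "(pH, 0) \<in> badges s a" using R(1,2) unfolding badges_def good_rep_def by (metis (mono_tags, lifting) mem_Collect_eq)
    have "\<forall>v\<in>badges s a. badge_le (pH, 0) v" using part1 unfolding badge_le_def by auto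
    from sig_unique[OF w this] have "signatures s a = {sig_H s a}" using sig by simp
    moreover have "rank_H s a = pH" using rank_Q[OF nn] pn by simp
    ultimately show ?thesis using sig by simp
  qed
  have part3: "signatures s a = {sig_H s a}"
    if h: "\<exists>u \<in> badges s a. fst u + snd u = pH + nH \<and> pH + nH = rank_H s a"
  proof -
    from h obtain u where u: "u \<in> badges s a" "fst u + snd u = pH + nH" by blast
    with part1 have "fst u = pH" "snd u = nH" by fastforce+
    hence "u = sig_H s a" using assms(2) by (simp add: prod_eq_iff)
    moreover have "\<forall>v\<in>badges s a. badge_le (sig_H s a) v" using part1 assms(2) unfolding badge_le_def by auto
    ultimately show ?thesis using sig_unique u(1) by metis
  qed
  show ?thesis using part1 part2 part3 by blast
qed

end
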